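(* Let $X$ be a compact metric space of negative type. Then the supremum defining $|X|$ is attained (i.e. $X$ is weighted) if and only if there exists $w\in\mathscr{M}(X)$ with $Zw(x)=1$ for all $x\in X$. In this case $w(X)\neq 0$, $|X|=w(X)$, and the supremum in the definition of $|X|$ is attained exactly at $\mu=w/w(X)$ (uniquely).
   Context: Let $(X,d)$ be a compact metric space, $Z(x,y)=e^{-d(x,y)}$, $\mathscr{M}(X)$ the space of finite signed Borel measures on $X$. For $\mu\in\mathscr{M}(X)$, $Z\mu(x)=\int_X Z(x,y)\,\mu(dy)$, and $\langle\mu,\nu\rangle_{\mathscr{W}}=\int_X Z\mu\,d\nu$. $X$ is of negative type if $(X,\sqrt d)$ embeds isometrically into a Hilbert space; in that case $\langle\cdot,\cdot\rangle_{\mathscr{W}}$ is an inner product on $\mathscr{M}(X)$ with norm $\|\cdot\|_{\mathscr{W}}$. The magnitude is $|X| = \sup\{1/\|\mu\|_{\mathscr{W}}^2 : \mu\in\mathscr{M}(X),\ \mu(X)=1\}\in(0,\infty]$. $X$ is called weighted if this supremum is attained; a measure $w$ with $Zw\equiv 1$ is called a weight of $X$. *)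

theory Defs
  imports "HOL-Analysis.Analysis"
begin

text \<open>A finite signed Borel measure on X is represented by a pair (P, N) of finite
  Borel measures on X (Jordan-type decomposition); the signed measure is P - N.
  All quantities below depend only on the difference P - N.\<close>

definition fsm :: "'a::metric_space set \<Rightarrow> 'a measure \<times> 'a measure \<Rightarrow> bool" where
  "fsm X \<mu> \<longleftrightarrow>
     sets (fst \<mu>) = sets (restrict_space borel X) \<and> finite_measure (fst \<mu>) \<and>
     sets (snd \<mu>) = sets (restrict_space borel X) \<and> finite_measure (snd \<mu>)"

definition smeas :: "'a measure \<times> 'a measure \<Rightarrow> 'a set \<Rightarrow> real" where
  "smeas \<mu> A = measure (fst \<mu>) A - measure (snd \<mu>) A"

definition sint :: "'a measure \<times> 'a measure \<Rightarrow> ('a \<Rightarrow> real) \<Rightarrow> real" where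
  "sint \<mu> f = integral\<^sup>L (fst \<mu>) f - integral\<^sup>L (snd \<mu>) f"

definition Zop :: "'a::metric_space measure \<times> 'a measure \<Rightarrow> 'a \<Rightarrow> real" where
  "Zop \<mu> x = sint \<mu> (\<lambda>y. exp (- dist x y))"

definition winner :: "'a::metric_space measure \<times> 'a measure \<Rightarrow> 'a measure \<times> 'a measure \<Rightarrow> real" where
  "winner \<mu> \<nu> = sint \<nu> (Zop \<mu>)"

definition magnitude :: "'a::metric_space set \<Rightarrow> ereal" where
  "magnitude X = (SUP \<mu>\<in>{\<mu>. fsm X \<mu> \<and> smeas \<mu> X = 1}. ereal (1 / winner \<mu> \<mu>))"

definition attains_magnitude :: "'a::metric_space set \<Rightarrow> 'a measure \<times> 'a measure \<Rightarrow> bool" where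
  "attains_magnitude X \<mu> \<longleftrightarrow> fsm X \<mu> \<and> smeas \<mu> X = 1 \<and> magnitude X = ereal (1 / winner \<mu> \<mu>)"

definition weighted :: "'a::metric_space set \<Rightarrow> bool" where
  "weighted X \<longleftrightarrow> (\<exists>\<mu>. attains_magnitude X \<mu>)"

definition is_weight :: "'a::metric_space set \<Rightarrow> 'a measure \<times> 'a measure \<Rightarrow> bool" where
  "is_weight X w \<longleftrightarrow> fsm X w \<and> (\<forall>x\<in>X. Zop w x = 1)"

end

theory Submission
  imports Defs "HOL-Analysis.Analysis" "HOL-Probability.Giry_Monad"
begin

lemma gram_schmidt_exp:
  fixes S :: "'h::real_inner set"
  assumes "finite S"
  shows "\<exists>E. finite E \<and> (\<forall>e\<in>E. \<forall>e'\<in>E. inner e e' = (if e = e' then 1 else 0)) \<and>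
             (\<forall>u\<in>S. u = (\<Sum>e\<in>E. inner u e *\<^sub>R e))"
  using assms
proof (induction S)
  case empty
  then show ?case by (intro exI[of _ "{}"]) auto
next
  case (insert a S)
  then obtain E where E: "finite E" "\<forall>e\<in>E. \<forall>e'\<in>E. inner e e' = (if e = e' then 1 else 0)"
     "\<forall>u\<in>S. u = (\<Sum>e\<in>E. inner u e *\<^sub>R e)"
    by blast
  define r where "r = a - (\<Sum>e\<in>E. inner a e *\<^sub>R e)"
  have ortho: "inner r e' = 0" if "e' \<in> E" for e'
  proof -
    have "inner (\<Sum>e\<in>E. inner a e *\<^sub>R e) e' = (\<Sum>e\<in>E. inner a e * inner e e')"
      by (simp add: inner_sum_left)
    also have "\<dots> = (\<Sum>e\<in>E. if e = e' then inner a e' else 0)"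
      using E(2) that by (intro sum.cong) auto
    also have "\<dots> = inner a e'" using E(1) that by simp
    finally show ?thesis by (simp add: r_def inner_diff_left)
  qed
  show ?case
  proof (cases "r = 0")
    case True
    then show ?thesis using E by (intro exI[of _ E]) (auto simp: r_def)
  next
    case False
    define n where "n = r /\<^sub>R norm r"
    have nn: "inner n n = 1" using False
      by (simp add: n_def inner_commute power2_norm_eq_inner[symmetric] power2_eq_square)
    have ne: "inner n e = 0" if "e \<in> E" for e
      using ortho[OF that] by (simp add: n_def)
    have nE: "n \<notin> E" using ne nn by force
    have orth: "\<forall>e\<in>insert n E. \<forall>e'\<in>insert n E. inner e e' = (if e = e' then 1 else 0)"
      using E(2) nn ne by (auto simp: inner_commute)
    have un: "inner u n = 0" if "u \<in> S" for u
    proof -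
      have "inner u n = inner (\<Sum>e\<in>E. inner u e *\<^sub>R e) n" using E(3) that by metis
      also have "\<dots> = (\<Sum>e\<in>E. inner u e * inner e n)" by (simp add: inner_sum_left)
      also have "\<dots> = 0" using ne by (simp add: inner_commute)
      finally show ?thesis .
    qed
    have an: "inner a n *\<^sub>R n = r"
    proof -
      have "inner a n = inner (r + (\<Sum>e\<in>E. inner a e *\<^sub>R e)) n" by (simp add: r_def)
      also have "\<dots> = inner r n + (\<Sum>e\<in>E. inner a e * inner e n)"
        by (simp add: inner_add_left inner_sum_left)
      also have "\<dots> = inner r n" using ne by (simp add: inner_commute)
      also have "\<dots> = norm r" using False
        by (simp add: n_def power2_norm_eq_inner[symmetric] power2_eq_square)
      finally show ?thesis using False by (simp add: n_def)
    qed
    show ?thesis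
    proof (intro exI[of _ "insert n E"] conjI orth)
      show "finite (insert n E)" using E(1) by simp
      show "\<forall>u\<in>insert a S. u = (\<Sum>e\<in>insert n E. inner u e *\<^sub>R e)"
      proof
        fix u assume "u \<in> insert a S"
        then consider "u = a" | "u \<in> S" by blast
        then show "u = (\<Sum>e\<in>insert n E. inner u e *\<^sub>R e)"
        proof cases
          case 1
          then show ?thesis using E(1) nE an by (simp add: r_def)
        next
          case 2
          then show ?thesis using E(1) nE un E(3) by simp
        qed
      qed
    qed
  qed
qed

lemma inner_expand:
  fixes S :: "'h::real_inner set"
  assumes "finite S"
  shows "\<exists>E. finite E \<and> (\<forall>u\<in>S. \<forall>v. inner u v = (\<Sum>e\<in>E. inner u e * inner v e))"
proof -
  obtain E where E: "finite E" "\<forall>u\<in>S. u = (\<Sum>e\<in>E. inner u e *\<^sub>R e)"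
    using gram_schmidt_exp[OF assms] by blast
  have "inner u v = (\<Sum>e\<in>E. inner u e * inner v e)" if "u \<in> S" for u v
  proof -
    have "inner u v = inner (\<Sum>e\<in>E. inner u e *\<^sub>R e) v" using E(2) that by metis
    also have "\<dots> = (\<Sum>e\<in>E. inner u e * inner e v)" by (simp add: inner_sum_left)
    also have "\<dots> = (\<Sum>e\<in>E. inner u e * inner v e)" by (simp add: inner_commute)
    finally show ?thesis .
  qed
  then show ?thesis using E(1) by blast
qed

lemma inner_pow_psd:
  fixes u :: "'i \<Rightarrow> 'h::real_inner"
  assumes "finite I"
  shows "0 \<le> (\<Sum>i\<in>I. \<Sum>j\<in>I. a i * a j * inner (u i) (u j) ^ n)"
proof (induction n arbitrary: a)
  case 0
  have "(\<Sum>i\<in>I. \<Sum>j\<in>I. a i * a j) = (\<Sum>i\<in>I. a i) * (\<Sum>i\<in>I. a i)"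
    by (simp add: sum_product)
  then show ?case by simp
next
  case (Suc n)
  obtain E where E: "finite E" "\<forall>x\<in>u ` I. \<forall>v. inner x v = (\<Sum>e\<in>E. inner x e * inner v e)"
    using inner_expand[of "u ` I"] assms by blast
  have "(\<Sum>i\<in>I. \<Sum>j\<in>I. a i * a j * inner (u i) (u j) ^ Suc n)
      = (\<Sum>i\<in>I. \<Sum>j\<in>I. \<Sum>e\<in>E. (a i * inner (u i) e) * (a j * inner (u j) e) * inner (u i) (u j) ^ n)"
  proof (intro sum.cong refl)
    fix i j assume "i \<in> I" "j \<in> I"
    then have "inner (u i) (u j) = (\<Sum>e\<in>E. inner (u i) e * inner (u j) e)" using E(2) by blast
    then have "a i * a j * inner (u i) (u j) ^ Suc n = a i * a j * inner (u i) (u j) ^ n * (\<Sum>e\<in>E. inner (u i) e * inner (u j) e)"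
      by (metis mult.commute mult.left_commute power_Suc)
    also have "\<dots> = (\<Sum>e\<in>E. (a i * inner (u i) e) * (a j * inner (u j) e) * inner (u i) (u j) ^ n)"
      by (simp add: sum_distrib_left algebra_simps)
    finally show "a i * a j * inner (u i) (u j) ^ Suc n = (\<Sum>e\<in>E. (a i * inner (u i) e) * (a j * inner (u j) e) * inner (u i) (u j) ^ n)" .
  qed
  also have "\<dots> = (\<Sum>e\<in>E. \<Sum>i\<in>I. \<Sum>j\<in>I. (a i * inner (u i) e) * (a j * inner (u j) e) * inner (u i) (u j) ^ n)"
    by (simp add: sum.swap[of _ E] sum.swap[of _ E I])
  also have "\<dots> \<ge> 0"
    by (intro sum_nonneg Suc.IH)
  finally show ?case by simp
qed

lemma exp_sums_real: "(\<lambda>n. x ^ n / fact n) sums exp (x::real)"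
  using exp_converges[of x] by (simp add: divide_inverse mult.commute)

lemma gauss_psd:
  fixes u :: "'i \<Rightarrow> 'h::real_inner"
  assumes "finite I"
  shows "0 \<le> (\<Sum>i\<in>I. \<Sum>j\<in>I. a i * a j * exp (- (norm (u i - u j))\<^sup>2))"
proof -
  define b where "b i = a i * exp (- (norm (u i))\<^sup>2)" for i
  have eq: "a i * a j * exp (- (norm (u i - u j))\<^sup>2) = b i * b j * exp (2 * inner (u i) (u j))" for i j
  proof -
    have "(norm (u i - u j))\<^sup>2 = (norm (u i))\<^sup>2 + (norm (u j))\<^sup>2 - 2 * inner (u i) (u j)"
      by (simp add: power2_norm_eq_inner inner_diff_left inner_diff_right inner_commute)
    then have "exp (- (norm (u i - u j))\<^sup>2) = exp (- (norm (u i))\<^sup>2) * exp (- (norm (u j))\<^sup>2) * exp (2 * inner (u i) (u j))"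
      by (simp add: exp_add[symmetric] exp_diff)
    then show ?thesis by (simp add: b_def)
  qed
  have sm: "(\<lambda>n. \<Sum>i\<in>I. \<Sum>j\<in>I. b i * b j * ((2 * inner (u i) (u j)) ^ n / fact n))
        sums (\<Sum>i\<in>I. \<Sum>j\<in>I. b i * b j * exp (2 * inner (u i) (u j)))"
    by (intro sums_sum sums_mult exp_sums_real)
  have nn: "0 \<le> (\<Sum>i\<in>I. \<Sum>j\<in>I. b i * b j * ((2 * inner (u i) (u j)) ^ n / fact n))" for n
  proof -
    have "(\<Sum>i\<in>I. \<Sum>j\<in>I. b i * b j * ((2 * inner (u i) (u j)) ^ n / fact n))
       = (2 ^ n / fact n) * (\<Sum>i\<in>I. \<Sum>j\<in>I. b i * b j * inner (u i) (u j) ^ n)"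
      by (simp add: sum_distrib_left power_mult_distrib algebra_simps)
    also have "\<dots> \<ge> 0" using inner_pow_psd[OF assms, of b u n] by simp
    finally show ?thesis .
  qed
  have "0 \<le> (\<Sum>i\<in>I. \<Sum>j\<in>I. b i * b j * exp (2 * inner (u i) (u j)))"
    using sums_le[OF nn sums_zero sm] by simp
  then show ?thesis by (simp add: eq)
qed

lemma quad_cs:
  fixes A B C :: real
  assumes "\<And>t. 0 \<le> A + 2 * t * B + t\<^sup>2 * C" "0 \<le> C"
  shows "B\<^sup>2 \<le> A * C"
proof (cases "C = 0")
  case True
  have "B = 0"
  proof (rule ccontr)
    assume "B \<noteq> 0"
    have "0 \<le> A + 2 * (- (A + 1) / (2 * B)) * B" using assms(1)[of "- (A + 1) / (2 * B)"] True by simp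
    also have "\<dots> = -1" using \<open>B \<noteq> 0\<close> by (simp add: field_simps)
    finally show False by simp
  qed
  then show ?thesis using True by simp
next
  case False
  then have C: "C > 0" using assms(2) by simp
  have "0 \<le> A + 2 * (- B / C) * B + (- B / C)\<^sup>2 * C" by (rule assms(1))
  also have "\<dots> = A - B\<^sup>2 / C" using C by (simp add: field_simps power2_eq_square)
  finally have "B\<^sup>2 / C \<le> A" by simp
  then show ?thesis using C by (simp add: field_simps)
qed

lemma gauss_cs:
  fixes u :: "nat \<Rightarrow> 'h::real_inner"
  shows "(\<Sum>i<m. b i * exp (- (norm (u i - a))\<^sup>2))\<^sup>2
         \<le> (\<Sum>i<m. \<Sum>j<m. b i * b j * exp (- (norm (u i - u j))\<^sup>2))"
proof -
  define A where "A = (\<Sum>i<m. \<Sum>j<m. b i * b j * exp (- (norm (u i - u j))\<^sup>2))"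
  define B where "B = (\<Sum>i<m. b i * exp (- (norm (u i - a))\<^sup>2))"
  have "0 \<le> A + 2 * t * B + t\<^sup>2 * 1" for t
  proof -
    define u' where "u' i = (if i < m then u i else a)" for i
    define b' where "b' i = (if i < m then b i else t)" for i
    have "0 \<le> (\<Sum>i\<in>insert m {..<m}. \<Sum>j\<in>insert m {..<m}. b' i * b' j * exp (- (norm (u' i - u' j))\<^sup>2))"
      by (rule gauss_psd) simp
    also have "\<dots> = A + 2 * t * B + t\<^sup>2"
      by (simp add: A_def B_def u'_def b'_def sum.distrib sum_distrib_left norm_minus_commute
                    power2_eq_square algebra_simps)
    finally show ?thesis by simp
  qed
  then have "B\<^sup>2 \<le> A * 1" by (intro quad_cs) auto
  then show ?thesis by (simp add: A_def B_def)
qed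



definition addm :: "real \<Rightarrow> 'a measure \<Rightarrow> real \<Rightarrow> 'a measure \<Rightarrow> 'a measure" where
  "addm a M b N = measure_of (space M) (sets M) (\<lambda>A. ennreal a * emeasure M A + ennreal b * emeasure N A)"

lemma sets_addm[simp]: "sets (addm a M b N) = sets M"
  by (simp add: addm_def sets.sets_measure_of_eq)

lemma space_addm[simp]: "space (addm a M b N) = space M"
  by (simp add: addm_def sets.space_measure_of_eq)

lemma emeasure_addm:
  assumes "sets N = sets M" "A \<in> sets M"
  shows "emeasure (addm a M b N) A = ennreal a * emeasure M A + ennreal b * emeasure N A"
  unfolding addm_def
proof (rule emeasure_measure_of_sigma)
  show "sigma_algebra (space M) (sets M)" by (rule sets.sigma_algebra_axioms)
  show "positive (sets M) (\<lambda>A. ennreal a * emeasure M A + ennreal b * emeasure N A)"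
    by (simp add: positive_def)
  show "countably_additive (sets M) (\<lambda>A. ennreal a * emeasure M A + ennreal b * emeasure N A)"
    unfolding countably_additive_def
  proof (intro allI impI)
    fix F :: "nat \<Rightarrow> _" assume F: "range F \<subseteq> sets M" "disjoint_family F"
    have FN: "range F \<subseteq> sets N" using F assms by simp
    have "(\<Sum>i. ennreal a * emeasure M (F i) + ennreal b * emeasure N (F i))
        = (\<Sum>i. ennreal a * emeasure M (F i)) + (\<Sum>i. ennreal b * emeasure N (F i))"
      by (rule suminf_add[symmetric]) auto
    also have "\<dots> = ennreal a * emeasure M (\<Union>i. F i) + ennreal b * emeasure N (\<Union>i. F i)"
      using suminf_emeasure[OF F] suminf_emeasure[OF FN F(2)] by simp
    finally show "(\<Sum>i. ennreal a * emeasure M (F i) + ennreal b * emeasure N (F i))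
        = ennreal a * emeasure M (\<Union>i. F i) + ennreal b * emeasure N (\<Union>i. F i)" .
  qed
qed fact

lemma meas_addm: "f \<in> measurable M K \<Longrightarrow> f \<in> measurable (addm a M b N) K"
  by (subst measurable_cong_sets[OF sets_addm refl])

lemma meas_eqs: "sets N = sets M \<Longrightarrow> f \<in> measurable M K \<Longrightarrow> f \<in> measurable N K"
  by (subst measurable_cong_sets[OF _ refl])

lemma nn_integral_addm:
  assumes sN: "sets N = sets M" and f: "f \<in> borel_measurable M"
  shows "(\<integral>\<^sup>+x. f x \<partial>addm a M b N) = ennreal a * (\<integral>\<^sup>+x. f x \<partial>M) + ennreal b * (\<integral>\<^sup>+x. f x \<partial>N)"
  using f
proof (induction rule: borel_measurable_induct)
  case (cong f g)
  have sp: "space N = space M" using sets_eq_imp_space_eq[OF sN] .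
  have "(\<integral>\<^sup>+x. f x \<partial>addm a M b N) = (\<integral>\<^sup>+x. g x \<partial>addm a M b N)"
    by (intro nn_integral_cong) (simp add: cong)
  moreover have "(\<integral>\<^sup>+x. f x \<partial>M) = (\<integral>\<^sup>+x. g x \<partial>M)"
    by (intro nn_integral_cong) (simp add: cong)
  moreover have "(\<integral>\<^sup>+x. f x \<partial>N) = (\<integral>\<^sup>+x. g x \<partial>N)"
    by (intro nn_integral_cong) (simp add: cong sp)
  ultimately show ?case using cong by simp
next
  case (set A)
  then show ?case using sN by (simp add: emeasure_addm)
next
  case (mult u c)
  have m1: "u \<in> borel_measurable (addm a M b N)" by (rule meas_addm[OF mult(2)])
  have m2: "u \<in> borel_measurable N" by (rule meas_eqs[OF sN mult(2)])
  show ?case using mult by (simp add: nn_integral_cmult m1 m2 mult.commute mult.left_commute distrib_left)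
next
  case (add u v)
  have m1: "u \<in> borel_measurable (addm a M b N)" "v \<in> borel_measurable (addm a M b N)"
    by (rule meas_addm, fact)+
  have m2: "u \<in> borel_measurable N" "v \<in> borel_measurable N"
    by (rule meas_eqs[OF sN], fact)+
  show ?case using add
    by (simp add: nn_integral_add m1 m2 distrib_left algebra_simps)
next
  case (seq U)
  have inc: "incseq U" using seq by blast
  have m1: "U i \<in> borel_measurable (addm a M b N)" for i by (simp add: meas_addm seq(1))
  have m2: "U i \<in> borel_measurable N" for i by (simp add: meas_eqs[OF sN] seq(1))
  have "(\<integral>\<^sup>+x. (SUP i. U i) x \<partial>addm a M b N) = (SUP i. (\<integral>\<^sup>+x. U i x \<partial>addm a M b N))"
    unfolding SUP_apply by (rule nn_integral_monotone_convergence_SUP[OF inc m1])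
  also have "\<dots> = (SUP i. ennreal a * (\<integral>\<^sup>+x. U i x \<partial>M) + ennreal b * (\<integral>\<^sup>+x. U i x \<partial>N))"
    using seq by simp
  also have "\<dots> = (SUP i. ennreal a * (\<integral>\<^sup>+x. U i x \<partial>M)) + (SUP i. ennreal b * (\<integral>\<^sup>+x. U i x \<partial>N))"
  proof (rule ennreal_SUP_add)
    show "incseq (\<lambda>i. ennreal a * (\<integral>\<^sup>+x. U i x \<partial>M))"
      using incseq_nn_integral[OF inc, of M] by (auto simp: incseq_def intro: mult_left_mono)
    show "incseq (\<lambda>i. ennreal b * (\<integral>\<^sup>+x. U i x \<partial>N))"
      using incseq_nn_integral[OF inc, of N] by (auto simp: incseq_def intro: mult_left_mono)
  qed
  also have "\<dots> = ennreal a * (SUP i. (\<integral>\<^sup>+x. U i x \<partial>M)) + ennreal b * (SUP i. (\<integral>\<^sup>+x. U i x \<partial>N))"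
    by (simp add: SUP_mult_left_ennreal)
  also have "\<dots> = ennreal a * (\<integral>\<^sup>+x. (SUP i. U i) x \<partial>M) + ennreal b * (\<integral>\<^sup>+x. (SUP i. U i) x \<partial>N)"
    unfolding SUP_apply
    by (simp add: nn_integral_monotone_convergence_SUP[OF inc seq(1)]
                  nn_integral_monotone_convergence_SUP[OF inc m2])
  finally show ?case .
qed

lemma integral_addm:
  fixes f :: "'a \<Rightarrow> real"
  assumes sN: "sets N = sets M" and a: "a \<ge> 0" and b: "b \<ge> 0"
    and iM: "integrable M f" and iN: "integrable N f"
  shows "integrable (addm a M b N) f"
    and "integral\<^sup>L (addm a M b N) f = a * integral\<^sup>L M f + b * integral\<^sup>L N f"
proof -
  have fM: "f \<in> borel_measurable M" using iM by auto
  have fA: "f \<in> borel_measurable (addm a M b N)" using fM by (rule meas_addm)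
  have nf: "\<And>g::'a\<Rightarrow>real. g \<in> borel_measurable M \<Longrightarrow> (\<integral>\<^sup>+x. g x \<partial>addm a M b N) = ennreal a * (\<integral>\<^sup>+x. g x \<partial>M) + ennreal b * (\<integral>\<^sup>+x. g x \<partial>N)"
    by (rule nn_integral_addm[OF sN]) auto
  have finM: "(\<integral>\<^sup>+x. ennreal (norm (f x)) \<partial>M) < \<infinity>" using iM by (simp add: integrable_iff_bounded)
  have finN: "(\<integral>\<^sup>+x. ennreal (norm (f x)) \<partial>N) < \<infinity>" using iN by (simp add: integrable_iff_bounded)
  show iA: "integrable (addm a M b N) f"
  proof (rule integrableI_bounded[OF fA])
    have fa: "(\<lambda>x. ennreal (norm (f x))) \<in> borel_measurable M" using fM by measurable
    show "(\<integral>\<^sup>+x. ennreal (norm (f x)) \<partial>addm a M b N) < \<infinity>"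
      unfolding nn_integral_addm[OF sN fa] using finM finN by (simp add: ennreal_mult_less_top)
  qed
  have le: "(\<integral>\<^sup>+x. ennreal (g x) \<partial>K) \<le> (\<integral>\<^sup>+x. ennreal (norm (f x)) \<partial>K)" if "g = f \<or> g = (\<lambda>x. - f x)" for g K
    using that by (auto intro!: nn_integral_mono ennreal_leI)
  define pM where "pM = (\<integral>\<^sup>+x. ennreal (f x) \<partial>M)"
  define qM where "qM = (\<integral>\<^sup>+x. ennreal (- f x) \<partial>M)"
  define pN where "pN = (\<integral>\<^sup>+x. ennreal (f x) \<partial>N)"
  define qN where "qN = (\<integral>\<^sup>+x. ennreal (- f x) \<partial>N)"
  have fin: "pM < \<infinity>" "qM < \<infinity>" "pN < \<infinity>" "qN < \<infinity>"
    using le[of f M] le[of "\<lambda>x. - f x" M] le[of f N] le[of "\<lambda>x. - f x" N] finM finN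
    unfolding pM_def qM_def pN_def qN_def by (auto dest: le_less_trans)
  have e: "enn2real (ennreal a * p + ennreal b * q) = a * enn2real p + b * enn2real q"
    if "p < \<infinity>" "q < \<infinity>" for p q
    using that a b by (simp add: enn2real_plus ennreal_mult_less_top enn2real_mult)
  have "integral\<^sup>L (addm a M b N) f
      = enn2real (ennreal a * pM + ennreal b * pN) - enn2real (ennreal a * qM + ennreal b * qN)"
    unfolding real_lebesgue_integral_def[OF iA] pM_def qM_def pN_def qN_def
    using fM by (simp add: nf)
  also have "\<dots> = a * (enn2real pM - enn2real qM) + b * (enn2real pN - enn2real qN)"
    using e[OF fin(1) fin(3)] e[OF fin(2) fin(4)] by (simp add: algebra_simps)
  also have "\<dots> = a * integral\<^sup>L M f + b * integral\<^sup>L N f"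
    unfolding real_lebesgue_integral_def[OF iM] real_lebesgue_integral_def[OF iN] pM_def qM_def pN_def qN_def ..
  finally show "integral\<^sup>L (addm a M b N) f = a * integral\<^sup>L M f + b * integral\<^sup>L N f" .
qed

lemma finite_measure_addm:
  assumes "sets N = sets M" "finite_measure M" "finite_measure N"
  shows "finite_measure (addm a M b N)"
proof (rule finite_measureI)
  have "space N = space M" using sets_eq_imp_space_eq[OF assms(1)] .
  then show "emeasure (addm a M b N) (space (addm a M b N)) \<noteq> \<infinity>"
    using assms by (simp add: emeasure_addm finite_measure.emeasure_finite ennreal_mult_eq_top_iff)
qed

lemma enn2real_lin:
  assumes "p < \<infinity>" "q < \<infinity>" "(a::real) \<ge> 0" "(b::real) \<ge> 0"
  shows "enn2real (ennreal a * p + ennreal b * q) = a * enn2real p + b * enn2real q"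
  using assms by (simp add: enn2real_plus ennreal_mult_less_top enn2real_mult)

lemma measure_addm:
  assumes "sets N = sets M" "finite_measure M" "finite_measure N" "A \<in> sets M" "a \<ge> 0" "b \<ge> 0"
  shows "measure (addm a M b N) A = a * measure M A + b * measure N A"
proof -
  have "emeasure M A < \<infinity>" "emeasure N A < \<infinity>"
    using finite_measure.emeasure_finite[OF assms(2), of A] finite_measure.emeasure_finite[OF assms(3), of A]
    by (simp_all add: less_top)
  then show ?thesis using assms
    by (simp add: measure_def emeasure_addm enn2real_lin)
qed



definition validc :: "'a::metric_space set \<Rightarrow> (real \<times> 'a measure) list \<Rightarrow> bool" where
  "validc X c \<longleftrightarrow> (\<forall>p\<in>set c. sets (snd p) = sets (restrict_space borel X) \<and> finite_measure (snd p))"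

definition cfun :: "(real \<times> 'a measure) list \<Rightarrow> ('a \<Rightarrow> real) \<Rightarrow> real" where
  "cfun c f = sum_list (map (\<lambda>p. fst p * integral\<^sup>L (snd p) f) c)"

definition cset :: "(real \<times> 'a measure) list \<Rightarrow> 'a set \<Rightarrow> real" where
  "cset c A = sum_list (map (\<lambda>p. fst p * measure (snd p) A) c)"

definition tv :: "(real \<times> 'a measure) list \<Rightarrow> real" where
  "tv c = sum_list (map (\<lambda>p. \<bar>fst p\<bar> * measure (snd p) (space (snd p))) c)"

definition scl :: "real \<Rightarrow> (real \<times> 'a measure) list \<Rightarrow> (real \<times> 'a measure) list" where
  "scl t c = map (\<lambda>p. (t * fst p, snd p)) c"

definition kk :: "'a::metric_space \<Rightarrow> 'a \<Rightarrow> real" where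
  "kk x y = exp (- dist x y)"

definition Zc :: "(real \<times> 'a::metric_space measure) list \<Rightarrow> 'a \<Rightarrow> real" where
  "Zc c x = cfun c (kk x)"

definition Bc :: "(real \<times> 'a::metric_space measure) list \<Rightarrow> (real \<times> 'a measure) list \<Rightarrow> real" where
  "Bc c d = cfun d (Zc c)"

definition pc :: "'a measure \<times> 'a measure \<Rightarrow> (real \<times> 'a measure) list" where
  "pc \<mu> = [(1, fst \<mu>), (-1, snd \<mu>)]"

lemma cfun_simps[simp]: "cfun [] f = 0" "cfun (p # c) f = fst p * integral\<^sup>L (snd p) f + cfun c f"
  "cfun (c @ d) f = cfun c f + cfun d f"
  by (simp_all add: cfun_def)

lemma cset_simps[simp]: "cset [] A = 0" "cset (p # c) A = fst p * measure (snd p) A + cset c A"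
  "cset (c @ d) A = cset c A + cset d A"
  by (simp_all add: cset_def)

lemma tv_simps[simp]: "tv [] = 0" "tv (p # c) = \<bar>fst p\<bar> * measure (snd p) (space (snd p)) + tv c"
  "tv (c @ d) = tv c + tv d"
  by (simp_all add: tv_def)

lemma scl_simps[simp]: "scl t [] = []" "scl t (p # c) = (t * fst p, snd p) # scl t c"
  "scl t (c @ d) = scl t c @ scl t d"
  by (simp_all add: scl_def)

lemma cfun_scl[simp]: "cfun (scl t c) f = t * cfun c f"
  by (induction c) (auto simp: algebra_simps)

lemma cset_scl[simp]: "cset (scl t c) A = t * cset c A"
  by (induction c) (auto simp: algebra_simps)

lemma tv_scl[simp]: "tv (scl t c) = \<bar>t\<bar> * tv c"
  by (induction c) (auto simp: algebra_simps abs_mult)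

lemma validc_simps[simp]: "validc X []"
  "validc X (p # c) \<longleftrightarrow> sets (snd p) = sets (restrict_space borel X) \<and> finite_measure (snd p) \<and> validc X c"
  "validc X (c @ d) \<longleftrightarrow> validc X c \<and> validc X d"
  "validc X (scl t c) \<longleftrightarrow> validc X c"
  by (auto simp: validc_def scl_def)

lemma cfun_zero[simp]: "cfun c (\<lambda>x. 0) = 0"
  by (induction c) auto

lemma cfun_cmult: "cfun c (\<lambda>x. t * f x) = t * cfun c f"
  by (induction c) (auto simp: algebra_simps)

lemma tv_nonneg: "validc X c \<Longrightarrow> 0 \<le> tv c"
  by (induction c) auto

lemma pc_simps[simp]: "cfun (pc \<mu>) f = sint \<mu> f" "cset (pc \<mu>) A = smeas \<mu> A"
  by (simp_all add: pc_def sint_def smeas_def)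

lemma validc_pc[simp]: "validc X (pc \<mu>) \<longleftrightarrow> fsm X \<mu>"
  by (auto simp: pc_def fsm_def)

lemma Zc_pc: "Zc (pc \<mu>) = Zop \<mu>"
  by (simp add: fun_eq_iff Zc_def Zop_def kk_def[abs_def])

lemma Bc_pc: "Bc (pc \<mu>) (pc \<nu>) = winner \<mu> \<nu>"
  by (simp add: Bc_def winner_def Zc_pc)

lemma Zc_simps[simp]: "Zc (c @ d) x = Zc c x + Zc d x" "Zc (scl t c) x = t * Zc c x"
  by (simp_all add: Zc_def)

lemma Bc_right[simp]: "Bc c (d @ e) = Bc c d + Bc c e" "Bc c (scl t d) = t * Bc c d"
  by (simp_all add: Bc_def)

lemma Bc_scl_left[simp]: "Bc (scl t c) d = t * Bc c d"
proof -
  have "Zc (scl t c) = (\<lambda>x. t * Zc c x)" by (simp add: fun_eq_iff)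
  then show ?thesis by (simp add: Bc_def cfun_cmult)
qed

locale ntX =
  fixes X :: "'a::metric_space set"
  assumes compX: "compact X"
begin

lemma vm:
  assumes "validc X c" "p \<in> set c"
  shows "space (snd p) = X" "finite_measure (snd p)" "sets (snd p) = sets (restrict_space borel X)"
proof -
  show s: "sets (snd p) = sets (restrict_space borel X)" using assms by (auto simp: validc_def)
  show "space (snd p) = X" using sets_eq_imp_space_eq[OF s] by (simp add: space_restrict_space)
  show "finite_measure (snd p)" using assms by (auto simp: validc_def)
qed

lemma meas_cont:
  assumes "sets M = sets (restrict_space borel X)" "continuous_on X f"
  shows "f \<in> borel_measurable M"
  by (rule meas_eqs[OF assms(1) borel_measurable_continuous_on_restrict[OF assms(2)]])

lemma cont_bounded:
  assumes "continuous_on X (f :: 'a \<Rightarrow> real)"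
  obtains B where "\<forall>x\<in>X. \<bar>f x\<bar> \<le> B"
proof -
  have "compact (f ` X)" using compact_continuous_image[OF assms compX] .
  then obtain B where "\<forall>y\<in>f ` X. norm y \<le> B" using compact_imp_bounded bounded_iff by metis
  then show ?thesis using that by auto
qed

lemma integrable_meas_bounded:
  assumes "sets M = sets (restrict_space borel X)" "finite_measure M"
    "f \<in> borel_measurable M" "\<forall>x\<in>X. \<bar>f x\<bar> \<le> (B::real)"
  shows "integrable M f"
proof -
  have sp: "space M = X" using sets_eq_imp_space_eq[OF assms(1)] by (simp add: space_restrict_space)
  show ?thesis
    by (rule finite_measure.integrable_const_bound[OF assms(2), of _ B]) (use assms sp in auto)
qed

lemma integrable_cont:
  fixes f :: "'a \<Rightarrow> real"
  assumes "sets M = sets (restrict_space borel X)" "finite_measure M" "continuous_on X f"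
  shows "integrable M f"
proof -
  obtain B where "\<forall>x\<in>X. \<bar>f x\<bar> \<le> B" using cont_bounded[OF assms(3)] by blast
  then show ?thesis using integrable_meas_bounded[OF assms(1,2) meas_cont[OF assms(1,3)]] by blast
qed

lemma cfun_add:
  assumes "validc X c" "continuous_on X f" "continuous_on X g"
  shows "cfun c (\<lambda>x. f x + g x) = cfun c f + cfun c g"
  using assms
proof (induction c)
  case (Cons p c)
  have "integrable (snd p) f" "integrable (snd p) g"
    using Cons.prems by (auto intro!: integrable_cont)
  then show ?case using Cons by (simp add: algebra_simps)
qed simp

lemma cfun_diff:
  assumes "validc X c" "continuous_on X f" "continuous_on X g"
  shows "cfun c (\<lambda>x. f x - g x) = cfun c f - cfun c g"
  using assms
proof (induction c)
  case (Cons p c)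
  have "integrable (snd p) f" "integrable (snd p) g"
    using Cons.prems by (auto intro!: integrable_cont)
  then show ?case using Cons by (simp add: algebra_simps)
qed simp

lemma cfun_sum:
  assumes "validc X c" "finite I" "\<And>i. i \<in> I \<Longrightarrow> continuous_on X (f i)"
  shows "cfun c (\<lambda>x. \<Sum>i\<in>I. f i x) = (\<Sum>i\<in>I. cfun c (f i))"
  using assms(2,3)
proof (induction I)
  case (insert i I)
  have "cfun c (\<lambda>x. \<Sum>i\<in>insert i I. f i x) = cfun c (\<lambda>x. f i x + (\<Sum>i\<in>I. f i x))"
    using insert by simp
  also have "\<dots> = cfun c (f i) + cfun c (\<lambda>x. \<Sum>i\<in>I. f i x)"
    using insert by (intro cfun_add[OF assms(1)]) (auto intro!: continuous_on_sum)
  finally show ?case using insert by simp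
qed simp

lemma cfun_cong:
  assumes "validc X c" "\<And>x. x \<in> X \<Longrightarrow> f x = g x"
  shows "cfun c f = cfun c g"
  using assms
proof (induction c)
  case (Cons p c)
  have "integral\<^sup>L (snd p) f = integral\<^sup>L (snd p) g"
    by (rule Bochner_Integration.integral_cong[OF refl]) (use Cons.prems(2) vm[OF Cons.prems(1), of p] in auto)
  then show ?case using Cons by simp
qed simp

lemma cfun_bound:
  assumes "validc X c" "f \<in> borel_measurable (restrict_space borel X)" "\<And>x. x \<in> X \<Longrightarrow> \<bar>f x\<bar> \<le> B"
  shows "\<bar>cfun c f\<bar> \<le> B * tv c"
  using assms(1)
proof (induction c)
  case (Cons p c)
  have sp: "space (snd p) = X" and fm: "finite_measure (snd p)" and ss: "sets (snd p) = sets (restrict_space borel X)"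
    using vm[OF Cons.prems] by auto
  have fmeas: "f \<in> borel_measurable (snd p)" using ss assms(2) by (rule meas_eqs)
  have int: "integrable (snd p) f"
    using integrable_meas_bounded[OF ss fm fmeas] assms(3) by blast
  have "\<bar>integral\<^sup>L (snd p) f\<bar> \<le> integral\<^sup>L (snd p) (\<lambda>x. \<bar>f x\<bar>)"
    using integral_norm_bound[of "snd p" f] by simp
  also have "\<dots> \<le> integral\<^sup>L (snd p) (\<lambda>x. B)"
    using int assms(3) sp fm by (intro integral_mono) (auto intro!: finite_measure.integrable_const)
  also have "\<dots> = B * measure (snd p) (space (snd p))" by simp
  finally have h: "\<bar>integral\<^sup>L (snd p) f\<bar> \<le> B * measure (snd p) (space (snd p))" .
  have "\<bar>fst p * integral\<^sup>L (snd p) f\<bar> \<le> \<bar>fst p\<bar> * (B * measure (snd p) (space (snd p)))"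
    using h by (simp add: abs_mult mult_left_mono)
  then show ?case using Cons by (simp add: algebra_simps)
qed simp

definition part :: "real \<Rightarrow> nat \<Rightarrow> (nat \<Rightarrow> 'a) \<Rightarrow> (nat \<Rightarrow> 'a set) \<Rightarrow> bool" where
  "part r m xs A \<longleftrightarrow> (\<forall>i<m. xs i \<in> X \<and> A i \<in> sets (restrict_space borel X) \<and> A i \<subseteq> X \<and>
       (\<forall>x\<in>A i. dist x (xs i) < r)) \<and> disjoint_family_on A {..<m} \<and> (\<Union>i<m. A i) = X"

lemma part_exists:
  assumes "r > 0"
  shows "\<exists>m xs A. part r m xs A"
proof -
  have cov: "X \<subseteq> (\<Union>c\<in>X. ball c r)" using assms by auto
  have "\<exists>F. F \<subseteq> X \<and> finite F \<and> X \<subseteq> (\<Union>c\<in>F. ball c r)"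
    by (rule compactE_image[OF compX _ cov]) auto
  then obtain F where F: "F \<subseteq> X" "finite F" "X \<subseteq> (\<Union>c\<in>F. ball c r)" by blast
  obtain l where l: "set l = F" "distinct l" using finite_distinct_list[OF F(2)] by blast
  define m where "m = length l"
  define xs where "xs i = l ! i" for i
  define A where "A i = X \<inter> (ball (xs i) r - (\<Union>j<i. ball (xs j) r))" for i
  have xsX: "xs i \<in> X" if "i < m" for i using that F(1) l(1) by (auto simp: xs_def m_def)
  have Asets: "A i \<in> sets (restrict_space borel X)" for i
  proof -
    have "ball (xs i) r - (\<Union>j<i. ball (xs j) r) \<in> sets borel" by measurable
    then show ?thesis unfolding A_def sets_restrict_space by blast
  qed
  have disj: "disjoint_family_on A {..<m}"
    unfolding disjoint_family_on_def
  proof (intro ballI impI)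
    fix i j assume "i \<in> {..<m}" "j \<in> {..<m}" "i \<noteq> j"
    then consider "i < j" | "j < i" by linarith
    then show "A i \<inter> A j = {}" by cases (auto simp: A_def)
  qed
  have un: "(\<Union>i<m. A i) = X"
  proof
    show "(\<Union>i<m. A i) \<subseteq> X" by (auto simp: A_def)
    show "X \<subseteq> (\<Union>i<m. A i)"
    proof
      fix x assume "x \<in> X"
      then obtain c where "c \<in> F" "x \<in> ball c r" using F(3) by blast
      then obtain k where k: "k < m" "x \<in> ball (xs k) r"
        using l(1) by (auto simp: in_set_conv_nth xs_def m_def)
      define i where "i = (LEAST i. x \<in> ball (xs i) r)"
      have i1: "x \<in> ball (xs i) r" unfolding i_def by (rule LeastI[of _ k]) (use k in auto)
      have i2: "i \<le> k" unfolding i_def by (rule Least_le) (use k in auto)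
      have i3: "x \<notin> ball (xs j) r" if "j < i" for j using not_less_Least[OF that[unfolded i_def]] i_def by blast
      have "x \<in> A i" using i1 i3 \<open>x \<in> X\<close> by (auto simp: A_def)
      then show "x \<in> (\<Union>i<m. A i)" using i2 k(1) by auto
    qed
  qed
  have "part r m xs A"
    unfolding part_def using xsX Asets disj un by (auto simp: A_def dist_commute)
  then show ?thesis by blast
qed

lemma part_indicator_sum:
  assumes "part r m xs A" "x \<in> X"
  shows "(\<Sum>i<m. indicator (A i) x) = (1::real)"
proof -
  obtain i where i: "i < m" "x \<in> A i" using assms unfolding part_def by blast
  have "(\<Sum>j<m. indicator (A j) x) = (\<Sum>j<m. if j = i then (1::real) else 0)"
  proof (intro sum.cong refl)
    fix j assume j: "j \<in> {..<m}"
    show "indicator (A j) x = (if j = i then (1::real) else 0)"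
    proof (cases "j = i")
      case False
      then have "x \<notin> A j" using assms(1) i j unfolding part_def disjoint_family_on_def by blast
      then show ?thesis using False by simp
    qed (use i in simp)
  qed
  also have "\<dots> = 1" using i by simp
  finally show ?thesis .
qed

lemma approx_meas:
  assumes p: "part r m xs A" and ss: "sets M = sets (restrict_space borel X)" and fm: "finite_measure M"
    and f: "f \<in> borel_measurable (restrict_space borel X)" and fb: "\<forall>x\<in>X. \<bar>f x\<bar> \<le> B"
    and fa: "\<And>i x. i < m \<Longrightarrow> x \<in> A i \<Longrightarrow> \<bar>f x - f (xs i)\<bar> \<le> \<eta>"
  shows "\<bar>integral\<^sup>L M f - (\<Sum>i<m. measure M (A i) * f (xs i))\<bar> \<le> \<eta> * measure M (space M)"
proof -
  have sp: "space M = X" using sets_eq_imp_space_eq[OF ss] by (simp add: space_restrict_space)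
  have AM: "A i \<in> sets M" if "i < m" for i using p that ss unfolding part_def by auto
  have fM: "f \<in> borel_measurable M" using ss f by (rule meas_eqs)
  have fi: "integrable M f" using integrable_meas_bounded[OF ss fm fM fb] .
  define s where "s x = (\<Sum>i<m. indicator (A i) x * f (xs i))" for x
  have ii: "integrable M (\<lambda>x. indicator (A i) x * f (xs i))" if "i < m" for i
    using AM[OF that] fm by (intro integrable_mult_left integrable_real_indicator)
       (use finite_measure.emeasure_finite[OF fm] in \<open>auto simp: less_top\<close>)
  have si: "integrable M s" unfolding s_def by (intro Bochner_Integration.integrable_sum ii) simp
  have "integral\<^sup>L M s = (\<Sum>i<m. integral\<^sup>L M (\<lambda>x. indicator (A i) x * f (xs i)))"
    unfolding s_def by (intro Bochner_Integration.integral_sum ii) simp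
  also have "\<dots> = (\<Sum>i<m. measure M (A i) * f (xs i))"
  proof (intro sum.cong refl)
    fix i assume "i \<in> {..<m}"
    then have "A i \<inter> space M = A i" using AM sets.sets_into_space by blast
    then show "integral\<^sup>L M (\<lambda>x. indicator (A i) x * f (xs i)) = measure M (A i) * f (xs i)"
      by simp
  qed
  finally have s_eq: "integral\<^sup>L M s = (\<Sum>i<m. measure M (A i) * f (xs i))" .
  have pw: "\<bar>f x - s x\<bar> \<le> \<eta>" if xX: "x \<in> X" for x
  proof -
    obtain i where i: "i < m" "x \<in> A i" using p xX unfolding part_def by blast
    have "s x = (\<Sum>j<m. if j = i then f (xs i) else 0)"
      unfolding s_def
    proof (intro sum.cong refl)
      fix j assume j: "j \<in> {..<m}"
      show "indicator (A j) x * f (xs j) = (if j = i then f (xs i) else 0)"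
      proof (cases "j = i")
        case False
        then have "x \<notin> A j" using p i j unfolding part_def disjoint_family_on_def by blast
        then show ?thesis using False by simp
      qed (use i in simp)
    qed
    also have "\<dots> = f (xs i)" using i by simp
    finally show ?thesis using fa[OF i] by simp
  qed
  have "\<bar>integral\<^sup>L M f - integral\<^sup>L M s\<bar> = \<bar>integral\<^sup>L M (\<lambda>x. f x - s x)\<bar>"
    using fi si by simp
  also have "\<dots> \<le> integral\<^sup>L M (\<lambda>x. \<bar>f x - s x\<bar>)"
    using integral_norm_bound[of M "\<lambda>x. f x - s x"] by simp
  also have "\<dots> \<le> integral\<^sup>L M (\<lambda>x. \<eta>)"
    using fi si pw sp fm by (intro integral_mono) (auto intro!: finite_measure.integrable_const)
  also have "\<dots> = \<eta> * measure M (space M)" by simp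
  finally show ?thesis using s_eq by simp
qed

lemma approx_c:
  assumes c: "validc X c" and p: "part r m xs A"
    and f: "f \<in> borel_measurable (restrict_space borel X)" and fb: "\<forall>x\<in>X. \<bar>f x\<bar> \<le> B"
    and fa: "\<And>i x. i < m \<Longrightarrow> x \<in> A i \<Longrightarrow> \<bar>f x - f (xs i)\<bar> \<le> \<eta>"
  shows "\<bar>cfun c f - (\<Sum>i<m. cset c (A i) * f (xs i))\<bar> \<le> \<eta> * tv c"
  using c
proof (induction c)
  case Nil
  then show ?case by (simp add: cset_def)
next
  case (Cons q c)
  have h: "\<bar>integral\<^sup>L (snd q) f - (\<Sum>i<m. measure (snd q) (A i) * f (xs i))\<bar> \<le> \<eta> * measure (snd q) (space (snd q))"
    using Cons.prems by (intro approx_meas[OF p _ _ f fb fa]) auto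
  have eq: "(\<Sum>i<m. cset (q # c) (A i) * f (xs i)) = fst q * (\<Sum>i<m. measure (snd q) (A i) * f (xs i)) + (\<Sum>i<m. cset c (A i) * f (xs i))"
    by (simp add: sum_distrib_left sum.distrib algebra_simps)
  have "\<bar>fst q * (integral\<^sup>L (snd q) f - (\<Sum>i<m. measure (snd q) (A i) * f (xs i)))\<bar> \<le> \<bar>fst q\<bar> * (\<eta> * measure (snd q) (space (snd q)))"
    using h by (simp add: abs_mult mult_left_mono)
  then show ?case using Cons eq by (simp add: algebra_simps)
qed

end



lemma exp_lip:
  assumes "(s::real) \<ge> 0" "t \<ge> 0"
  shows "\<bar>exp (- s) - exp (- t)\<bar> \<le> \<bar>s - t\<bar>"
proof -
  have key: "\<bar>exp (- s) - exp (- t)\<bar> \<le> \<bar>s - t\<bar>" if "0 \<le> s" "s \<le> t" for s t :: real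
  proof -
    have e: "exp (- s) - exp (- t) = exp (- s) * (1 - exp (- (t - s)))"
      by (simp add: algebra_simps exp_diff[symmetric] exp_add[symmetric])
    have a: "0 \<le> 1 - exp (- (t - s))" using that by simp
    have b: "1 - exp (- (t - s)) \<le> t - s" using exp_ge_add_one_self[of "s - t"] by (simp add: algebra_simps)
    have c: "exp (- s) \<le> 1" using that by simp
    have "exp (- s) * (1 - exp (- (t - s))) \<le> 1 * (t - s)"
      using a b c by (intro mult_mono) auto
    moreover have "0 \<le> exp (- s) * (1 - exp (- (t - s)))" using a by simp
    ultimately show ?thesis using e that by simp
  qed
  show ?thesis
  proof (cases "s \<le> t")
    case True then show ?thesis using key assms by blast
  next
    case False then show ?thesis using key[of t s] assms by (simp add: abs_minus_commute)
  qed
qed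

lemma kk_lip: "\<bar>kk x y - kk x' y'\<bar> \<le> dist x x' + dist y y'"
proof -
  have "\<bar>kk x y - kk x' y'\<bar> \<le> \<bar>dist x y - dist x' y'\<bar>"
    unfolding kk_def by (rule exp_lip) auto
  also have "\<dots> \<le> dist x x' + dist y y'"
    by (smt (verit, best) dist_commute dist_triangle)
  finally show ?thesis .
qed

lemma kk_sym: "kk x y = kk y x"
  by (simp add: kk_def dist_commute)

lemma kk_bound: "\<bar>kk x y\<bar> \<le> 1"
  by (simp add: kk_def)

lemma kk_cont[continuous_intros]: "continuous_on S (kk x)" "continuous_on S (\<lambda>y. kk y x)"
  unfolding kk_def by (intro continuous_intros)+

lemma eps_zero:
  assumes "\<And>r. r > 0 \<Longrightarrow> \<bar>a\<bar> \<le> r * K" "(K::real) \<ge> 0"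
  shows "a = 0"
proof (rule ccontr)
  assume "a \<noteq> 0"
  then have pos: "\<bar>a\<bar> > 0" by simp
  have "\<bar>a\<bar> \<le> (\<bar>a\<bar> / (K + 1)) * K" using assms(1)[of "\<bar>a\<bar> / (K + 1)"] pos assms(2) by simp
  also have "\<dots> < \<bar>a\<bar>" using pos assms(2) by (simp add: field_simps)
  finally show False by simp
qed

context ntX
begin

lemma Zc_lip:
  assumes "validc X c" "x \<in> X" "x' \<in> X"
  shows "\<bar>Zc c x - Zc c x'\<bar> \<le> dist x x' * tv c"
proof -
  have "Zc c x - Zc c x' = cfun c (\<lambda>y. kk x y - kk x' y)"
    unfolding Zc_def by (rule cfun_diff[symmetric]) (use assms in \<open>auto intro: continuous_intros\<close>)
  also have "\<bar>\<dots>\<bar> \<le> dist x x' * tv c"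
  proof (rule cfun_bound[OF assms(1)])
    show "(\<lambda>y. kk x y - kk x' y) \<in> borel_measurable (restrict_space borel X)"
      by (intro borel_measurable_continuous_on_restrict continuous_intros)
    show "\<bar>kk x y - kk x' y\<bar> \<le> dist x x'" for y using kk_lip[of x y x' y] by simp
  qed
  finally show ?thesis .
qed

lemma Zc_cont:
  assumes "validc X c"
  shows "continuous_on X (Zc c)"
  unfolding continuous_on_iff
proof (intro ballI allI impI)
  fix x e assume x: "x \<in> X" and e: "(e::real) > 0"
  have tv: "tv c \<ge> 0" using tv_nonneg[OF assms] .
  show "\<exists>d>0. \<forall>x'\<in>X. dist x' x < d \<longrightarrow> dist (Zc c x') (Zc c x) < e"
  proof (intro exI[of _ "e / (tv c + 1)"] conjI ballI impI)
    show "e / (tv c + 1) > 0" using e tv by simp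
    fix x' assume x': "x' \<in> X" and d: "dist x' x < e / (tv c + 1)"
    have "dist (Zc c x') (Zc c x) \<le> dist x' x * tv c" using Zc_lip[OF assms x' x] by (simp add: dist_real_def)
    also have "\<dots> \<le> dist x' x * (tv c + 1)" using tv by (simp add: mult_left_mono)
    also have "\<dots> < e" using d tv by (simp add: field_simps)
    finally show "dist (Zc c x') (Zc c x) < e" .
  qed
qed

lemma Zc_left_add: "validc X c \<Longrightarrow> validc X e \<Longrightarrow> validc X d \<Longrightarrow> Bc (c @ e) d = Bc c d + Bc e d"
proof -
  assume v: "validc X c" "validc X e" "validc X d"
  have "Zc (c @ e) = (\<lambda>x. Zc c x + Zc e x)" by (simp add: fun_eq_iff)
  then show ?thesis unfolding Bc_def using cfun_add[OF v(3) Zc_cont[OF v(1)] Zc_cont[OF v(2)]] by simp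
qed

lemma cset_abs_sum:
  assumes "validc X c" "part r m xs A"
  shows "(\<Sum>j<m. \<bar>cset c (A j)\<bar>) \<le> tv c"
  using assms(1)
proof (induction c)
  case Nil then show ?case by simp
next
  case (Cons p c)
  have sp: "space (snd p) = X" and fm: "finite_measure (snd p)" and ss: "sets (snd p) = sets (restrict_space borel X)"
    using vm[OF Cons.prems] by auto
  have Am: "A j \<in> sets (snd p)" if "j < m" for j using assms(2) that ss unfolding part_def by auto
  have "(\<Sum>j<m. measure (snd p) (A j)) = measure (snd p) (\<Union>j<m. A j)"
    using Am assms(2) unfolding part_def
    by (intro finite_measure.finite_measure_finite_Union[symmetric] fm) auto
  also have "(\<Union>j<m. A j) = space (snd p)" using assms(2) sp unfolding part_def by auto
  finally have eq: "(\<Sum>j<m. measure (snd p) (A j)) = measure (snd p) (space (snd p))" .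
  have "(\<Sum>j<m. \<bar>cset (p # c) (A j)\<bar>) \<le> (\<Sum>j<m. \<bar>fst p\<bar> * measure (snd p) (A j) + \<bar>cset c (A j)\<bar>)"
    by (intro sum_mono) (simp add: abs_mult abs_triangle_ineq[THEN order_trans])
  also have "\<dots> = \<bar>fst p\<bar> * measure (snd p) (space (snd p)) + (\<Sum>j<m. \<bar>cset c (A j)\<bar>)"
    by (simp add: sum.distrib sum_distrib_left[symmetric] eq)
  also have "\<dots> \<le> tv (p # c)" using Cons by simp
  finally show ?case .
qed

definition DD :: "nat \<Rightarrow> (nat \<Rightarrow> 'a) \<Rightarrow> (nat \<Rightarrow> 'a set) \<Rightarrow> (real \<times> 'a measure) list \<Rightarrow> (real \<times> 'a measure) list \<Rightarrow> real" where
  "DD m xs A c d = (\<Sum>i<m. \<Sum>j<m. cset c (A i) * cset d (A j) * kk (xs i) (xs j))"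

lemma DD_sym: "DD m xs A c d = DD m xs A d c"
  unfolding DD_def by (subst sum.swap) (simp add: kk_sym mult_ac)

lemma Bc_approx:
  assumes c: "validc X c" and d: "validc X d" and p: "part r m xs A" and r: "r > 0"
  shows "\<bar>Bc c d - DD m xs A c d\<bar> \<le> 2 * r * tv c * tv d"
proof -
  have xsX: "xs i \<in> X" if "i < m" for i using p that unfolding part_def by auto
  have near: "dist y (xs j) < r" if "j < m" "y \<in> A j" for j y using p that unfolding part_def by auto
  have tvc: "tv c \<ge> 0" "tv d \<ge> 0" using tv_nonneg c d by auto
  define h where "h x = (\<Sum>j<m. cset c (A j) * kk x (xs j))" for x
  have hc: "continuous_on X h" unfolding h_def by (intro continuous_intros)
  have a: "\<bar>Zc c x - h x\<bar> \<le> r * tv c" if "x \<in> X" for x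
  proof -
    have "\<bar>cfun c (kk x) - (\<Sum>j<m. cset c (A j) * kk x (xs j))\<bar> \<le> r * tv c"
    proof (rule approx_c[OF c p])
      show "kk x \<in> borel_measurable (restrict_space borel X)"
        by (intro borel_measurable_continuous_on_restrict continuous_intros)
      show "\<forall>y\<in>X. \<bar>kk x y\<bar> \<le> 1" using kk_bound by blast
      show "\<bar>kk x y - kk x (xs j)\<bar> \<le> r" if "j < m" "y \<in> A j" for j y
        using kk_lip[of x y x "xs j"] near[OF that] by simp
    qed
    then show ?thesis by (simp add: Zc_def h_def)
  qed
  have b: "\<bar>cfun d (Zc c) - cfun d h\<bar> \<le> (r * tv c) * tv d"
  proof -
    have "cfun d (Zc c) - cfun d h = cfun d (\<lambda>x. Zc c x - h x)"
      by (rule cfun_diff[symmetric, OF d Zc_cont[OF c] hc])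
    also have "\<bar>\<dots>\<bar> \<le> (r * tv c) * tv d"
    proof (rule cfun_bound[OF d])
      show "(\<lambda>x. Zc c x - h x) \<in> borel_measurable (restrict_space borel X)"
        by (intro borel_measurable_continuous_on_restrict continuous_on_diff Zc_cont[OF c] hc)
    qed (use a in auto)
    finally show ?thesis .
  qed
  have ce: "cfun d h = (\<Sum>j<m. cset c (A j) * cfun d (\<lambda>x. kk x (xs j)))"
    unfolding h_def by (subst cfun_sum[OF d]) (auto intro!: continuous_intros simp: cfun_cmult)
  have dj: "\<bar>cfun d (\<lambda>x. kk x (xs j)) - (\<Sum>i<m. cset d (A i) * kk (xs i) (xs j))\<bar> \<le> r * tv d" for j
  proof (rule approx_c[OF d p])
    show "(\<lambda>x. kk x (xs j)) \<in> borel_measurable (restrict_space borel X)"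
      by (intro borel_measurable_continuous_on_restrict continuous_intros)
    show "\<forall>y\<in>X. \<bar>kk y (xs j)\<bar> \<le> 1" using kk_bound by blast
    show "\<bar>kk y (xs j) - kk (xs i) (xs j)\<bar> \<le> r" if "i < m" "y \<in> A i" for i y
      using kk_lip[of y "xs j" "xs i" "xs j"] near[OF that] by simp
  qed
  have DDe: "DD m xs A c d = (\<Sum>j<m. cset c (A j) * (\<Sum>i<m. cset d (A i) * kk (xs i) (xs j)))"
    unfolding DD_def by (simp add: sum_distrib_left kk_sym mult_ac)
  have "\<bar>cfun d h - DD m xs A c d\<bar> = \<bar>\<Sum>j<m. cset c (A j) * (cfun d (\<lambda>x. kk x (xs j)) - (\<Sum>i<m. cset d (A i) * kk (xs i) (xs j)))\<bar>"
    unfolding ce DDe by (simp add: sum_subtractf[symmetric] algebra_simps)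
  also have "\<dots> \<le> (\<Sum>j<m. \<bar>cset c (A j)\<bar> * (r * tv d))"
    by (rule order_trans[OF sum_abs]) (auto intro!: sum_mono mult_left_mono dj simp: abs_mult)
  also have "\<dots> = (\<Sum>j<m. \<bar>cset c (A j)\<bar>) * (r * tv d)" by (simp add: sum_distrib_right)
  also have "\<dots> \<le> tv c * (r * tv d)"
    using cset_abs_sum[OF c p] tvc r
    by (intro mult_right_mono) (auto simp: part_def intro!: mult_nonneg_nonneg)
  finally have e: "\<bar>cfun d h - DD m xs A c d\<bar> \<le> tv c * (r * tv d)" .
  have "\<bar>Bc c d - DD m xs A c d\<bar> \<le> \<bar>cfun d (Zc c) - cfun d h\<bar> + \<bar>cfun d h - DD m xs A c d\<bar>"
    unfolding Bc_def by linarith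
  also have "\<dots> \<le> 2 * r * tv c * tv d" using b e by (simp add: algebra_simps)
  finally show ?thesis .
qed

lemma Bc_sym:
  assumes c: "validc X c" and d: "validc X d"
  shows "Bc c d = Bc d c"
proof -
  have "Bc c d - Bc d c = 0"
  proof (rule eps_zero)
    fix r :: real assume r: "r > 0"
    obtain m xs A where p: "part r m xs A" using part_exists[OF r] by blast
    have "\<bar>Bc c d - DD m xs A c d\<bar> \<le> 2 * r * tv c * tv d" by (rule Bc_approx[OF c d p r])
    moreover have "\<bar>Bc d c - DD m xs A d c\<bar> \<le> 2 * r * tv d * tv c" by (rule Bc_approx[OF d c p r])
    ultimately show "\<bar>Bc c d - Bc d c\<bar> \<le> r * (4 * tv c * tv d)"
      using DD_sym[of m xs A c d] by (simp add: algebra_simps)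
  qed (use tv_nonneg[OF c] tv_nonneg[OF d] in simp)
  then show ?thesis by simp
qed

lemma Bc_null:
  assumes c: "validc X c" and d: "validc X d"
    and z: "\<And>B. B \<in> sets (restrict_space borel X) \<Longrightarrow> cset c B = 0"
  shows "Bc c d = 0"
proof (rule eps_zero)
  fix r :: real assume r: "r > 0"
  obtain m xs A where p: "part r m xs A" using part_exists[OF r] by blast
  have "DD m xs A c d = 0" unfolding DD_def using p z unfolding part_def by simp
  then show "\<bar>Bc c d\<bar> \<le> r * (2 * tv c * tv d)" using Bc_approx[OF c d p r] by (simp add: algebra_simps)
qed (use tv_nonneg[OF c] tv_nonneg[OF d] in simp)

end



locale nt = ntX X for X :: "'a::metric_space set" +
  fixes \<phi> :: "'a \<Rightarrow> 'h::real_inner"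
  assumes negt: "\<forall>x\<in>X. \<forall>y\<in>X. dist (\<phi> x) (\<phi> y) = sqrt (dist x y)"
begin

lemma kk_phi:
  assumes "x \<in> X" "y \<in> X"
  shows "kk x y = exp (- (norm (\<phi> x - \<phi> y))\<^sup>2)"
proof -
  have "norm (\<phi> x - \<phi> y) = sqrt (dist x y)" using negt assms by (simp add: dist_norm)
  then show ?thesis by (simp add: kk_def)
qed

lemma phi_cont: "continuous_on X \<phi>"
  unfolding continuous_on_iff
proof (intro ballI allI impI)
  fix x e assume x: "x \<in> X" and e: "(e::real) > 0"
  show "\<exists>d>0. \<forall>x'\<in>X. dist x' x < d \<longrightarrow> dist (\<phi> x') (\<phi> x) < e"
  proof (intro exI[of _ "e\<^sup>2"] conjI ballI impI)
    show "e\<^sup>2 > 0" using e by simp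
    fix x' assume x': "x' \<in> X" and d: "dist x' x < e\<^sup>2"
    have "dist (\<phi> x') (\<phi> x) = sqrt (dist x' x)" using negt x x' by simp
    also have "\<dots> < sqrt (e\<^sup>2)" using d by (simp only: real_sqrt_less_iff)
    also have "\<dots> = e" using e by simp
    finally show "dist (\<phi> x') (\<phi> x) < e" .
  qed
qed

lemma phi_inj: "x \<in> X \<Longrightarrow> y \<in> X \<Longrightarrow> \<phi> x = \<phi> y \<Longrightarrow> x = y"
  using negt by force

lemma DD_psd:
  assumes p: "part r m xs A"
  shows "0 \<le> DD m xs A c c"
proof -
  have xsX: "xs i \<in> X" if "i < m" for i using p that unfolding part_def by auto
  have "DD m xs A c c = (\<Sum>i\<in>{..<m}. \<Sum>j\<in>{..<m}. cset c (A i) * cset c (A j) * exp (- (norm (\<phi> (xs i) - \<phi> (xs j)))\<^sup>2))"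
    unfolding DD_def by (intro sum.cong refl) (simp add: kk_phi xsX)
  also have "\<dots> \<ge> 0" by (rule gauss_psd) simp
  finally show ?thesis .
qed

lemma Bc_psd:
  assumes c: "validc X c"
  shows "0 \<le> Bc c c"
proof (rule ccontr)
  assume neg: "\<not> 0 \<le> Bc c c"
  define r where "r = - Bc c c / (4 * (tv c * tv c + 1))"
  have tv: "tv c \<ge> 0" using tv_nonneg[OF c] .
  have den: "4 * (tv c * tv c + 1) > 0" using tv by (simp add: add_nonneg_pos)
  have r: "r > 0" unfolding r_def using neg den by (intro divide_pos_pos) auto
  obtain m xs A where p: "part r m xs A" using part_exists[OF r] by blast
  have "\<bar>Bc c c - DD m xs A c c\<bar> \<le> 2 * r * tv c * tv c" by (rule Bc_approx[OF c c p r])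
  then have "- Bc c c \<le> 2 * r * (tv c * tv c)" using DD_psd[OF p, of c] by linarith
  also have "\<dots> < 4 * r * (tv c * tv c + 1)" using r tv by (simp add: algebra_simps add_pos_nonneg)
  also have "\<dots> = r * (4 * (tv c * tv c + 1))" by (simp add: algebra_simps)
  also have "\<dots> = - Bc c c" unfolding r_def using den by simp
  finally show False by simp
qed

lemma Bc_expand:
  assumes c: "validc X c" and d: "validc X d"
  shows "Bc (c @ scl t d) (c @ scl t d) = Bc c c + 2 * t * Bc c d + t\<^sup>2 * Bc d d"
proof -
  have v: "validc X (scl t d)" using d by simp
  have "Bc (c @ scl t d) (c @ scl t d) = Bc c (c @ scl t d) + Bc (scl t d) (c @ scl t d)"
    using Zc_left_add[OF c v] c v by (simp add: algebra_simps)
  also have "\<dots> = Bc c c + t * Bc c d + t * (Bc d c + t * Bc d d)"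
    by (simp add: algebra_simps)
  also have "\<dots> = Bc c c + 2 * t * Bc c d + t\<^sup>2 * Bc d d"
    using Bc_sym[OF c d] by (simp add: algebra_simps power2_eq_square)
  finally show ?thesis .
qed

lemma Bc_cs:
  assumes c: "validc X c" and d: "validc X d"
  shows "(Bc c d)\<^sup>2 \<le> Bc c c * Bc d d"
proof (rule quad_cs)
  fix t
  have "0 \<le> Bc (c @ scl t d) (c @ scl t d)" by (rule Bc_psd) (use c d in simp)
  then show "0 \<le> Bc c c + 2 * t * Bc c d + t\<^sup>2 * Bc d d" using Bc_expand[OF c d] by simp
qed (rule Bc_psd[OF d])

lemma ga_cont: "continuous_on X (\<lambda>x. exp (- (norm (\<phi> x - a))\<^sup>2))"
  by (intro continuous_intros phi_cont)

lemma null_ga: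
  assumes c: "validc X c" and z: "Bc c c = 0"
  shows "cfun c (\<lambda>x. exp (- (norm (\<phi> x - a))\<^sup>2)) = 0"
proof -
  define g where "g x = exp (- (norm (\<phi> x - a))\<^sup>2)" for x
  have gc: "continuous_on X g" unfolding g_def by (rule ga_cont)
  have uc: "uniformly_continuous_on X g" by (rule compact_uniformly_continuous[OF gc compX])
  have tv: "tv c \<ge> 0" using tv_nonneg[OF c] .
  have "cfun c g = 0"
  proof (rule eps_zero)
    fix e :: real assume e: "e > 0"
    obtain \<delta> where \<delta>: "\<delta> > 0" "\<forall>x\<in>X. \<forall>x'\<in>X. dist x' x < \<delta> \<longrightarrow> dist (g x') (g x) < e"
      using uc e unfolding uniformly_continuous_on_def by metis
    define r where "r = min \<delta> (e\<^sup>2)"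
    have r: "r > 0" using \<delta> e by (simp add: r_def)
    obtain m xs A where p: "part r m xs A" using part_exists[OF r] by blast
    have xsX: "xs i \<in> X" if "i < m" for i using p that unfolding part_def by auto
    define S1 where "S1 = (\<Sum>i<m. cset c (A i) * g (xs i))"
    have a1: "\<bar>cfun c g - S1\<bar> \<le> e * tv c"
      unfolding S1_def
    proof (rule approx_c[OF c p])
      show "g \<in> borel_measurable (restrict_space borel X)"
        by (rule borel_measurable_continuous_on_restrict[OF gc])
      show "\<forall>x\<in>X. \<bar>g x\<bar> \<le> 1" by (simp add: g_def)
      show "\<bar>g y - g (xs i)\<bar> \<le> e" if "i < m" "y \<in> A i" for i y
      proof -
        have "y \<in> X" "dist y (xs i) < r" using p that unfolding part_def by auto
        then have "dist (g y) (g (xs i)) < e" using \<delta>(2) xsX[OF that(1)] r_def by auto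
        then show ?thesis by (simp add: dist_real_def)
      qed
    qed
    have a2: "\<bar>Bc c c - DD m xs A c c\<bar> \<le> 2 * r * tv c * tv c" by (rule Bc_approx[OF c c p r])
    have DDle: "DD m xs A c c \<le> 2 * e\<^sup>2 * (tv c * tv c)"
    proof -
      have "DD m xs A c c \<le> 2 * r * (tv c * tv c)" using a2 z by (simp add: algebra_simps)
      also have "\<dots> \<le> 2 * e\<^sup>2 * (tv c * tv c)" using tv by (intro mult_right_mono) (auto simp: r_def)
      finally show ?thesis .
    qed
    have cs: "S1\<^sup>2 \<le> DD m xs A c c"
    proof -
      have "S1 = (\<Sum>i<m. cset c (A i) * exp (- (norm (\<phi> (xs i) - a))\<^sup>2))"
        unfolding S1_def g_def ..
      moreover have "DD m xs A c c = (\<Sum>i<m. \<Sum>j<m. cset c (A i) * cset c (A j) * exp (- (norm (\<phi> (xs i) - \<phi> (xs j)))\<^sup>2))"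
        unfolding DD_def by (intro sum.cong refl) (simp add: kk_phi xsX)
      ultimately show ?thesis using gauss_cs[of "\<lambda>i. cset c (A i)" "\<lambda>i. \<phi> (xs i)" a m] by simp
    qed
    have q: "0 \<le> e\<^sup>2 * (tv c * tv c)" by simp
    have "S1\<^sup>2 \<le> 2 * (e\<^sup>2 * (tv c * tv c))" using cs DDle by (simp add: algebra_simps)
    then have "S1\<^sup>2 \<le> 4 * (e\<^sup>2 * (tv c * tv c))" using q by linarith
    also have "\<dots> = (2 * e * tv c)\<^sup>2" by (simp add: power2_eq_square algebra_simps)
    finally have "S1\<^sup>2 \<le> (2 * e * tv c)\<^sup>2" .
    then have "\<bar>S1\<bar> \<le> 2 * e * tv c" using e tv by (simp add: abs_le_square_iff[symmetric])
    then show "\<bar>cfun c g\<bar> \<le> e * (3 * tv c)" using a1 by linarith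
  qed (use tv in simp)
  then show ?thesis unfolding g_def .
qed

end



inductive_set Rs :: "('a \<Rightarrow> 'h::real_inner) \<Rightarrow> ('a \<Rightarrow> real) set" for \<phi> where
  Rb: "(\<lambda>x. k * exp (inner (\<phi> x) b)) \<in> Rs \<phi>"
| Ra: "f \<in> Rs \<phi> \<Longrightarrow> g \<in> Rs \<phi> \<Longrightarrow> (\<lambda>x. f x + g x) \<in> Rs \<phi>"

lemma Rs_mult:
  assumes "f \<in> Rs \<phi>" "g \<in> Rs \<phi>"
  shows "(\<lambda>x. f x * g x) \<in> Rs \<phi>"
  using assms
proof (induction f rule: Rs.induct)
  case (Rb k b)
  show ?case using Rb
  proof (induction g rule: Rs.induct)
    case (Rb k' b')
    have "(\<lambda>x. k * exp (inner (\<phi> x) b) * (k' * exp (inner (\<phi> x) b'))) = (\<lambda>x. (k * k') * exp (inner (\<phi> x) (b + b')))"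
      by (simp add: fun_eq_iff inner_add_right exp_add algebra_simps)
    then show ?case by (simp add: Rs.Rb)
  next
    case (Ra g1 g2)
    have "(\<lambda>x. k * exp (inner (\<phi> x) b) * (g1 x + g2 x)) = (\<lambda>x. k * exp (inner (\<phi> x) b) * g1 x + k * exp (inner (\<phi> x) b) * g2 x)"
      by (simp add: fun_eq_iff algebra_simps)
    then show ?case using Ra by (simp add: Rs.Ra)
  qed
next
  case (Ra f1 f2)
  have "(\<lambda>x. (f1 x + f2 x) * g x) = (\<lambda>x. f1 x * g x + f2 x * g x)"
    by (simp add: fun_eq_iff algebra_simps)
  then show ?case using Ra by (simp add: Rs.Ra)
qed

lemma Rs_cont:
  assumes "f \<in> Rs \<phi>" "continuous_on S \<phi>"
  shows "continuous_on S f"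
  using assms by (induction f rule: Rs.induct) (auto intro!: continuous_intros)

lemma Rs_const: "(\<lambda>x. k) \<in> Rs \<phi>"
proof -
  have "(\<lambda>x. k * exp (inner (\<phi> x) 0)) \<in> Rs \<phi>" by (rule Rs.Rb)
  then show ?thesis by simp
qed

context nt
begin

lemma null_Rs:
  assumes c: "validc X c" and z: "Bc c c = 0" and p: "p \<in> Rs \<phi>"
  shows "cfun c (\<lambda>x. exp (- (norm (\<phi> x))\<^sup>2) * p x) = 0"
  using p
proof (induction p rule: Rs.induct)
  case (Rb k b)
  define a where "a = (1/2) *\<^sub>R b"
  have eq: "exp (- (norm (\<phi> x))\<^sup>2) * (k * exp (inner (\<phi> x) b))
      = (k * exp (inner a a)) * exp (- (norm (\<phi> x - a))\<^sup>2)" for x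
  proof -
    have n: "(norm (\<phi> x - a))\<^sup>2 = (norm (\<phi> x))\<^sup>2 - inner (\<phi> x) b + inner a a"
      unfolding power2_norm_eq_inner by (simp add: inner_diff_left inner_diff_right a_def inner_commute)
    show ?thesis unfolding n by (simp add: exp_add[symmetric] exp_diff exp_minus field_simps)
  qed
  show ?case unfolding eq by (simp add: cfun_cmult null_ga[OF c z])
next
  case (Ra f g)
  have fc: "continuous_on X f" "continuous_on X g" using Ra Rs_cont phi_cont by blast+
  have "cfun c (\<lambda>x. exp (- (norm (\<phi> x))\<^sup>2) * (f x + g x))
      = cfun c (\<lambda>x. exp (- (norm (\<phi> x))\<^sup>2) * f x + exp (- (norm (\<phi> x))\<^sup>2) * g x)"
    by (simp add: algebra_simps)
  also have "\<dots> = cfun c (\<lambda>x. exp (- (norm (\<phi> x))\<^sup>2) * f x) + cfun c (\<lambda>x. exp (- (norm (\<phi> x))\<^sup>2) * g x)"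
    by (rule cfun_add[OF c]) (use fc in \<open>auto intro!: continuous_intros phi_cont\<close>)
  finally show ?case using Ra by simp
qed

lemma null_cont:
  assumes c: "validc X c" and z: "Bc c c = 0" and f: "continuous_on X f"
  shows "cfun c f = 0"
proof -
  define \<rho> where "\<rho> x = exp (- (norm (\<phi> x))\<^sup>2)" for x
  have \<rho>c: "continuous_on X \<rho>" unfolding \<rho>_def by (intro continuous_intros phi_cont)
  have \<rho>b: "0 < \<rho> x" "\<rho> x \<le> 1" for x by (auto simp: \<rho>_def)
  interpret R: function_ring_on "Rs \<phi>" X
  proof
    show "compact X" by (rule compX)
    show "continuous_on X f" if "f \<in> Rs \<phi>" for f using Rs_cont[OF that phi_cont] .
    show "(\<lambda>x. f x + g x) \<in> Rs \<phi>" if "f \<in> Rs \<phi>" "g \<in> Rs \<phi>" for f g using that by (rule Rs.Ra)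
    show "(\<lambda>x. f x * g x) \<in> Rs \<phi>" if "f \<in> Rs \<phi>" "g \<in> Rs \<phi>" for f g using that by (rule Rs_mult)
    show "(\<lambda>x. k) \<in> Rs \<phi>" for k by (rule Rs_const)
    show "\<exists>f\<in>Rs \<phi>. f x \<noteq> f y" if "x \<in> X" "y \<in> X" "x \<noteq> y" for x y
    proof (intro bexI)
      define b where "b = \<phi> x - \<phi> y"
      have "b \<noteq> 0" using phi_inj that by (auto simp: b_def)
      then have "inner (\<phi> x) b - inner (\<phi> y) b > 0" by (simp add: b_def inner_diff_left[symmetric])
      then show "1 * exp (inner (\<phi> x) b) \<noteq> 1 * exp (inner (\<phi> y) b)" by auto
      show "(\<lambda>z. 1 * exp (inner (\<phi> z) b)) \<in> Rs \<phi>" by (rule Rs.Rb)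
    qed
  qed
  have main: "cfun c (\<lambda>x. \<rho> x * g x) = 0" if g: "continuous_on X g" for g
  proof (rule eps_zero)
    fix e :: real assume e: "e > 0"
    obtain p where p: "p \<in> Rs \<phi>" "\<forall>x\<in>X. \<bar>g x - p x\<bar> < e" using R.Stone_Weierstrass_basic[OF g e] by blast
    have pc: "continuous_on X p" using Rs_cont[OF p(1) phi_cont] .
    have "cfun c (\<lambda>x. \<rho> x * g x) - cfun c (\<lambda>x. \<rho> x * p x) = cfun c (\<lambda>x. \<rho> x * g x - \<rho> x * p x)"
      by (rule cfun_diff[symmetric, OF c]) (use g pc \<rho>c in \<open>auto intro!: continuous_intros\<close>)
    also have "\<bar>\<dots>\<bar> \<le> e * tv c"
    proof (rule cfun_bound[OF c])
      show "(\<lambda>x. \<rho> x * g x - \<rho> x * p x) \<in> borel_measurable (restrict_space borel X)"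
        by (intro borel_measurable_continuous_on_restrict) (use g pc \<rho>c in \<open>auto intro!: continuous_intros\<close>)
      show "\<bar>\<rho> x * g x - \<rho> x * p x\<bar> \<le> e" if "x \<in> X" for x
      proof -
        have "\<bar>\<rho> x * g x - \<rho> x * p x\<bar> = \<rho> x * \<bar>g x - p x\<bar>" using \<rho>b[of x] by (simp add: abs_mult right_diff_distrib[symmetric])
        also have "\<dots> \<le> 1 * e" using \<rho>b[of x] p(2) that by (intro mult_mono) auto
        finally show ?thesis by simp
      qed
    qed
    finally show "\<bar>cfun c (\<lambda>x. \<rho> x * g x)\<bar> \<le> e * tv c"
      using null_Rs[OF c z p(1)] by (simp add: \<rho>_def)
  qed (rule tv_nonneg[OF c])
  have nz: "\<rho> x \<noteq> 0" for x using \<rho>b(1)[of x] by linarith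
  have "cfun c f = cfun c (\<lambda>x. \<rho> x * (f x / \<rho> x))"
    using nz by simp
  also have "\<dots> = 0"
    by (rule main) (use f \<rho>c \<rho>b in \<open>auto intro!: continuous_intros simp: less_imp_neq[symmetric]\<close>)
  finally show ?thesis .
qed

lemma cfun_tendsto:
  assumes c: "validc X c"
    and lim: "\<And>p. p \<in> set c \<Longrightarrow> (\<lambda>n. integral\<^sup>L (snd p) (g n)) \<longlonglongrightarrow> integral\<^sup>L (snd p) h"
  shows "(\<lambda>n. cfun c (g n)) \<longlonglongrightarrow> cfun c h"
  using lim
proof (induction c)
  case (Cons p c)
  have "(\<lambda>n. fst p * integral\<^sup>L (snd p) (g n) + cfun c (g n)) \<longlonglongrightarrow> fst p * integral\<^sup>L (snd p) h + cfun c h"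
    using Cons by (intro tendsto_add tendsto_mult_left) auto
  then show ?case by simp
qed simp

lemma cset_empty[simp]: "cset c {} = 0"
  by (induction c) auto

lemma null_closed:
  assumes c: "validc X c" and z: "Bc c c = 0" and F: "closed F"
  shows "cset c (F \<inter> X) = 0"
proof (cases "F = {}")
  case True then show ?thesis by simp
next
  case False
  define g where "g n x = max 0 (1 - real n * infdist x F)" for n x
  have gc: "continuous_on X (g n)" for n unfolding g_def by (intro continuous_intros)
  have g0: "cfun c (g n) = 0" for n by (rule null_cont[OF c z gc])
  have FX: "F \<inter> X \<in> sets (restrict_space borel X)"
    unfolding sets_restrict_space using F by auto
  have pt: "(\<lambda>n. g n x) \<longlonglongrightarrow> indicator (F \<inter> X) x" if "x \<in> X" for x
  proof (cases "x \<in> F")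
    case True
    then have "infdist x F = 0" using in_closed_iff_infdist_zero[OF F False] by simp
    then show ?thesis using True that by (simp add: g_def)
  next
    case xF: False
    have d: "infdist x F > 0" using in_closed_iff_infdist_zero[OF F False] xF infdist_nonneg[of x F]
      by (simp add: order_le_less)
    obtain N :: nat where N: "1 / infdist x F < N" using reals_Archimedean2 by blast
    have "eventually (\<lambda>n. g n x = 0) sequentially"
      unfolding eventually_sequentially
    proof (intro exI allI impI)
      fix n assume "N \<le> n"
      then have "1 / infdist x F < n" using N by (meson less_le_trans of_nat_le_iff)
      then have "1 < real n * infdist x F" using d by (simp add: field_simps)
      then show "g n x = 0" by (simp add: g_def)
    qed
    then show ?thesis using xF by (simp add: tendsto_eventually)
  qed
  have lim: "(\<lambda>n. integral\<^sup>L (snd p) (g n)) \<longlonglongrightarrow> integral\<^sup>L (snd p) (indicator (F \<inter> X))"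
    if p: "p \<in> set c" for p
  proof -
    have sp: "space (snd p) = X" and fm: "finite_measure (snd p)" and ss: "sets (snd p) = sets (restrict_space borel X)"
      using vm[OF c p] by auto
    show ?thesis
    proof (rule integral_dominated_convergence[where w = "\<lambda>x. 1"])
      show "indicator (F \<inter> X) \<in> borel_measurable (snd p)" using FX ss by simp
      show "g n \<in> borel_measurable (snd p)" for n
        by (rule meas_eqs[OF ss borel_measurable_continuous_on_restrict[OF gc]])
      show "integrable (snd p) (\<lambda>x. 1::real)" using fm by (simp add: finite_measure.integrable_const)
      show "AE x in snd p. (\<lambda>n. g n x) \<longlonglongrightarrow> indicator (F \<inter> X) x"
        using pt sp by (intro AE_I2) auto
      show "AE x in snd p. norm (g n x) \<le> 1" for n
        by (intro AE_I2) (auto simp: g_def infdist_nonneg)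
    qed
  qed
  have "(\<lambda>n. cfun c (g n)) \<longlonglongrightarrow> cfun c (indicator (F \<inter> X))"
    by (rule cfun_tendsto[OF c lim])
  then have "cfun c (indicator (F \<inter> X)) = 0" using g0 by (simp add: LIMSEQ_const_iff)
  moreover have "cfun c (indicator (F \<inter> X)) = cset c (F \<inter> X)"
    using c
  proof (induction c)
    case (Cons p c)
    have "space (snd p) = X" using vm[OF Cons.prems] by simp
    then have "integral\<^sup>L (snd p) (indicator (F \<inter> X)) = measure (snd p) (F \<inter> X)"
      by (simp add: Int_assoc)
    then show ?case using Cons by simp
  qed simp
  ultimately show ?thesis by simp
qed

lemma cset_sums:
  assumes c: "validc X c" and B: "range B \<subseteq> sets (restrict_space borel X)" "disjoint_family B"
  shows "(\<lambda>i. cset c (B i)) sums cset c (\<Union>i. B i)"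
  using c
proof (induction c)
  case Nil then show ?case by simp
next
  case (Cons p c)
  have fm: "finite_measure (snd p)" and ss: "sets (snd p) = sets (restrict_space borel X)"
    using vm[OF Cons.prems] by auto
  have "(\<lambda>i. measure (snd p) (B i)) sums measure (snd p) (\<Union>i. B i)"
    using B ss by (intro finite_measure.finite_measure_UNION[OF fm]) auto
  then have "(\<lambda>i. fst p * measure (snd p) (B i) + cset c (B i)) sums (fst p * measure (snd p) (\<Union>i. B i) + cset c (\<Union>i. B i))"
    using Cons by (intro sums_add sums_mult) auto
  then show ?case by simp
qed

lemma cset_diff:
  assumes c: "validc X c" and A: "A \<in> sets (restrict_space borel X)"
  shows "cset c (X - A) = cset c X - cset c A"
  using c
proof (induction c)
  case (Cons p c)
  have fm: "finite_measure (snd p)" and ss: "sets (snd p) = sets (restrict_space borel X)" and sp: "space (snd p) = X"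
    using vm[OF Cons.prems] by auto
  have "A \<subseteq> X" using A sets.sets_into_space[of A "restrict_space borel X"] by (simp add: space_restrict_space)
  moreover have "X \<in> sets (snd p)" using sp sets.top[of "snd p"] by simp
  ultimately have "measure (snd p) (X - A) = measure (snd p) X - measure (snd p) A"
    using A ss by (intro finite_measure.finite_measure_Diff[OF fm]) auto
  then have e2: "fst p * measure (snd p) (X - A) = fst p * measure (snd p) X - fst p * measure (snd p) A"
    by (simp add: right_diff_distrib)
  have "validc X c" using Cons.prems by simp
  then have ih: "cset c (X - A) = cset c X - cset c A" by (rule Cons.IH)
  show ?case unfolding cset_simps ih e2 by simp
qed simp

lemma null_sets:
  assumes c: "validc X c" and z: "Bc c c = 0" and A: "A \<in> sets (restrict_space borel X)"
  shows "cset c A = 0"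
proof -
  have cX: "cset c X = 0" using null_closed[OF c z closed_UNIV] by simp
  have main: "cset c (B \<inter> X) = 0" if B: "B \<in> sets borel" for B
  proof -
    have sb: "sets (borel :: 'a measure) = sigma_sets UNIV (Collect closed)"
      unfolding borel_eq_closed by (simp add: sets_measure_of)
    have "Int_stable (Collect closed)" by (auto simp: Int_stable_def)
    moreover have "Collect closed \<subseteq> Pow UNIV" by simp
    moreover have "B \<in> sigma_sets UNIV (Collect closed)" using B sb by simp
    ultimately show ?thesis
    proof (induction rule: sigma_sets_induct_disjoint)
      case (basic A) then show ?case using null_closed[OF c z] by simp
    next
      case empty then show ?case by simp
    next
      case (compl A)
      have AX: "A \<inter> X \<in> sets (restrict_space borel X)"
        using compl(1) sb unfolding sets_restrict_space by auto
      have "(UNIV - A) \<inter> X = X - (A \<inter> X)" by auto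
      then show ?case using cset_diff[OF c AX] cX compl(2) by simp
    next
      case (union A)
      have AX: "range (\<lambda>i. A i \<inter> X) \<subseteq> sets (restrict_space borel X)"
        using union(2) sb unfolding sets_restrict_space by auto
      have dj: "disjoint_family (\<lambda>i. A i \<inter> X)" using union(1) by (auto simp: disjoint_family_on_def)
      have "(\<lambda>i. cset c (A i \<inter> X)) sums cset c (\<Union>i. A i \<inter> X)" by (rule cset_sums[OF c AX dj])
      then have "(\<lambda>i. 0) sums cset c (\<Union>i. A i \<inter> X)" using union(3) by simp
      then have z0: "cset c (\<Union>i. A i \<inter> X) = 0" using sums_zero sums_unique2 by blast
      have eqU: "(\<Union>i. A i) \<inter> X = (\<Union>i. A i \<inter> X)" by auto
      show ?case unfolding eqU by (rule z0)
    qed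
  qed
  obtain B where "B \<in> sets borel" "A = X \<inter> B" using A unfolding sets_restrict_space by auto
  then show ?thesis using main[of B] by (simp add: Int_commute)
qed

end



fun rz :: "'a::metric_space set \<Rightarrow> (real \<times> 'a measure) list \<Rightarrow> 'a measure \<times> 'a measure" where
  "rz X [] = (null_measure (restrict_space borel X), null_measure (restrict_space borel X))"
| "rz X (p # c) = (if fst p \<ge> 0 then (addm (fst p) (snd p) 1 (fst (rz X c)), snd (rz X c))
                   else (fst (rz X c), addm (- fst p) (snd p) 1 (snd (rz X c))))"

lemma pert:
  fixes b \<alpha> \<beta> :: real
  assumes b: "b > 0" and q: "\<And>t. 0 < b + \<alpha> * t + \<beta> * t\<^sup>2 \<Longrightarrow> b \<le> b + \<alpha> * t + \<beta> * t\<^sup>2"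
  shows "\<alpha> = 0"
proof (rule ccontr)
  assume a: "\<alpha> \<noteq> 0"
  define L where "L = min (1 / (2 * (\<bar>\<beta>\<bar> + 1))) (b / (2 * \<alpha>\<^sup>2))"
  have a2: "\<alpha>\<^sup>2 > 0" using a by simp
  have L: "L > 0" using b a2 by (simp add: L_def)
  have L1: "\<bar>\<beta>\<bar> * L \<le> 1 / 2"
  proof -
    have "L \<le> 1 / (2 * (\<bar>\<beta>\<bar> + 1))" by (simp add: L_def)
    then have "(\<bar>\<beta>\<bar> + 1) * L \<le> (\<bar>\<beta>\<bar> + 1) * (1 / (2 * (\<bar>\<beta>\<bar> + 1)))"
      by (intro mult_left_mono) auto
    also have "\<dots> = 1 / 2" by (simp add: field_simps)
    finally show ?thesis using L by (simp add: algebra_simps)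
  qed
  have L2: "\<alpha>\<^sup>2 * L \<le> b / 2"
  proof -
    have "L \<le> b / (2 * \<alpha>\<^sup>2)" by (simp add: L_def)
    then have "\<alpha>\<^sup>2 * L \<le> \<alpha>\<^sup>2 * (b / (2 * \<alpha>\<^sup>2))" using a2 by (intro mult_left_mono) auto
    also have "\<dots> = b / 2" using a2 by (simp add: field_simps)
    finally show ?thesis .
  qed
  define P where "P = \<alpha>\<^sup>2 * L"
  define s where "s = \<beta> * L"
  have P: "P > 0" using a2 L by (simp add: P_def)
  have "\<bar>s\<bar> \<le> 1/2" unfolding s_def using L1 L by (simp add: abs_mult)
  then have s: "-1/2 \<le> s" "s \<le> 1/2" by (auto simp: abs_le_iff)
  define t where "t = - \<alpha> * L"
  have eq: "\<alpha> * t + \<beta> * t\<^sup>2 = P * (s - 1)"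
    by (simp add: t_def P_def s_def power2_eq_square algebra_simps)
  have up: "P * (s - 1) \<le> P * (- 1/2)" using P s by (intro mult_left_mono) auto
  have lo: "P * (- 3/2) \<le> P * (s - 1)" using P s by (intro mult_left_mono) auto
  have pos: "0 < b + \<alpha> * t + \<beta> * t\<^sup>2" using eq lo L2 b unfolding P_def by linarith
  have "b \<le> b + \<alpha> * t + \<beta> * t\<^sup>2" by (rule q[OF pos])
  then show False using eq up P by linarith
qed

context nt
begin

abbreviation "RX \<equiv> restrict_space borel X"

lemma rz_ok:
  assumes "validc X c"
  shows "fsm X (rz X c) \<and> (\<forall>f. continuous_on X f \<longrightarrow> sint (rz X c) f = cfun c f) \<and>
         (\<forall>A\<in>sets RX. smeas (rz X c) A = cset c A)"
  using assms
proof (induction c)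
  case Nil
  have "finite_measure (null_measure RX)"
    by (rule finite_measureI) simp
  then show ?case by (simp add: fsm_def sint_def smeas_def)
next
  case (Cons p c)
  have sp: "sets (snd p) = sets RX" and fp: "finite_measure (snd p)"
    using Cons.prems by auto
  have ih: "fsm X (rz X c)" "\<And>f. continuous_on X f \<Longrightarrow> sint (rz X c) f = cfun c f"
    "\<And>A. A \<in> sets RX \<Longrightarrow> smeas (rz X c) A = cset c A"
    using Cons by auto
  define P where "P = fst (rz X c)"
  define N where "N = snd (rz X c)"
  have PN: "sets P = sets RX" "finite_measure P" "sets N = sets RX" "finite_measure N"
    using ih(1) by (auto simp: fsm_def P_def N_def)
  show ?case
  proof (cases "fst p \<ge> 0")
    case True
    have r: "rz X (p # c) = (addm (fst p) (snd p) 1 P, N)" using True by (simp add: P_def N_def)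
    have f1: "fsm X (rz X (p # c))" unfolding r fsm_def
      using PN sp fp by (auto intro!: finite_measure_addm)
    moreover have "sint (rz X (p # c)) f = cfun (p # c) f" if f: "continuous_on X f" for f
    proof -
      have "integral\<^sup>L (addm (fst p) (snd p) 1 P) f = fst p * integral\<^sup>L (snd p) f + 1 * integral\<^sup>L P f"
        using True PN sp fp f by (intro integral_addm(2)) (auto intro!: integrable_cont)
      then show ?thesis using ih(2)[OF f] unfolding r by (simp add: sint_def P_def N_def)
    qed
    moreover have "smeas (rz X (p # c)) A = cset (p # c) A" if A: "A \<in> sets RX" for A
    proof -
      have "measure (addm (fst p) (snd p) 1 P) A = fst p * measure (snd p) A + 1 * measure P A"
        using True PN sp fp A by (intro measure_addm) auto
      then show ?thesis using ih(3)[OF A] unfolding r by (simp add: smeas_def P_def N_def)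
    qed
    ultimately show ?thesis by blast
  next
    case False
    have r: "rz X (p # c) = (P, addm (- fst p) (snd p) 1 N)" using False by (simp add: P_def N_def)
    have f1: "fsm X (rz X (p # c))" unfolding r fsm_def
      using PN sp fp by (auto intro!: finite_measure_addm)
    moreover have "sint (rz X (p # c)) f = cfun (p # c) f" if f: "continuous_on X f" for f
    proof -
      have "integral\<^sup>L (addm (- fst p) (snd p) 1 N) f = - fst p * integral\<^sup>L (snd p) f + 1 * integral\<^sup>L N f"
        using False PN sp fp f by (intro integral_addm(2)) (auto intro!: integrable_cont)
      then show ?thesis using ih(2)[OF f] unfolding r by (simp add: sint_def P_def N_def)
    qed
    moreover have "smeas (rz X (p # c)) A = cset (p # c) A" if A: "A \<in> sets RX" for A
    proof -
      have "measure (addm (- fst p) (snd p) 1 N) A = - fst p * measure (snd p) A + 1 * measure N A"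
        using False PN sp fp A by (intro measure_addm) auto
      then show ?thesis using ih(3)[OF A] unfolding r by (simp add: smeas_def P_def N_def)
    qed
    ultimately show ?thesis by blast
  qed
qed

lemma rz_fsm: "validc X c \<Longrightarrow> fsm X (rz X c)"
  using rz_ok by blast

lemma rz_smeas: "validc X c \<Longrightarrow> A \<in> sets RX \<Longrightarrow> smeas (rz X c) A = cset c A"
  using rz_ok by blast

lemma rz_sint: "validc X c \<Longrightarrow> continuous_on X f \<Longrightarrow> sint (rz X c) f = cfun c f"
  using rz_ok by blast

lemma X_sets: "X \<in> sets RX"
  using sets.top[of RX] by (simp add: space_restrict_space)

lemma Zop_eq: "fsm X \<mu> \<Longrightarrow> Zop \<mu> x = Zc (pc \<mu>) x"
  by (simp add: Zc_pc)

lemma winner_eq: "winner \<mu> \<nu> = Bc (pc \<mu>) (pc \<nu>)"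
  by (simp add: Bc_pc)

lemma Zop_rz: "validc X c \<Longrightarrow> Zop (rz X c) x = Zc c x"
proof -
  assume c: "validc X c"
  have "Zop (rz X c) x = sint (rz X c) (kk x)" by (simp add: Zop_def kk_def[abs_def])
  also have "\<dots> = cfun c (kk x)" by (rule rz_sint[OF c]) (intro continuous_intros)
  finally show ?thesis by (simp add: Zc_def)
qed

lemma winner_rz: "validc X c \<Longrightarrow> validc X d \<Longrightarrow> winner (rz X c) (rz X d) = Bc c d"
proof -
  assume c: "validc X c" and d: "validc X d"
  have v: "validc X (pc (rz X d))" using rz_fsm[OF d] by simp
  have "winner (rz X c) (rz X d) = cfun (pc (rz X d)) (Zop (rz X c))" by (simp add: winner_def)
  also have "\<dots> = cfun (pc (rz X d)) (Zc c)"
  proof -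
    have "Zop (rz X c) = Zc c" by (rule ext) (rule Zop_rz[OF c])
    then show ?thesis by simp
  qed
  also have "\<dots> = sint (rz X d) (Zc c)" by simp
  also have "\<dots> = cfun d (Zc c)" by (rule rz_sint[OF d Zc_cont[OF c]])
  finally show ?thesis by (simp add: Bc_def)
qed

definition dl :: "'a \<Rightarrow> (real \<times> 'a measure) list" where
  "dl x = [(1, return RX x)]"

lemma dl_valid: "x \<in> X \<Longrightarrow> validc X (dl x)"
proof -
  assume x: "x \<in> X"
  have "prob_space (return RX x)" by (rule prob_space_return) (use x in \<open>simp add: space_restrict_space\<close>)
  then have "finite_measure (return RX x)" unfolding prob_space_def by blast
  then show ?thesis by (simp add: dl_def)
qed

lemma dl_cfun: "x \<in> X \<Longrightarrow> continuous_on X f \<Longrightarrow> cfun (dl x) f = f x"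
  by (simp add: dl_def integral_return space_restrict_space borel_measurable_continuous_on_restrict)

lemma dl_cset: "x \<in> X \<Longrightarrow> cset (dl x) X = 1"
  using X_sets by (simp add: dl_def measure_return)

lemma Bc_dl: "validc X c \<Longrightarrow> x \<in> X \<Longrightarrow> Bc c (dl x) = Zc c x"
  by (simp add: Bc_def dl_cfun Zc_cont)

lemma Bc_dldl: "x \<in> X \<Longrightarrow> Bc (dl x) (dl x) = 1"
proof -
  assume x: "x \<in> X"
  have "cfun (dl x) (kk x) = kk x x" by (rule dl_cfun[OF x kk_cont(1)])
  then show ?thesis by (simp add: Bc_dl dl_valid x Zc_def kk_def)
qed

lemma cfun_one: "validc X d \<Longrightarrow> cfun d (\<lambda>_. 1) = cset d X"
proof (induction d)
  case (Cons p d)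
  have "space (snd p) = X" "finite_measure (snd p)" using vm[OF Cons.prems] by auto
  then show ?case using Cons by simp
qed simp

lemma mag_upper: "fsm X \<mu> \<Longrightarrow> smeas \<mu> X = 1 \<Longrightarrow> ereal (1 / winner \<mu> \<mu>) \<le> magnitude X"
  unfolding magnitude_def by (rule SUP_upper) auto

lemma mag_least: "(\<And>\<mu>. fsm X \<mu> \<Longrightarrow> smeas \<mu> X = 1 \<Longrightarrow> ereal (1 / winner \<mu> \<mu>) \<le> y) \<Longrightarrow> magnitude X \<le> y"
  unfolding magnitude_def by (rule SUP_least) auto

lemma weight_props:
  assumes w: "is_weight X w" and ne: "X \<noteq> {}"
  shows "smeas w X > 0" "magnitude X = ereal (smeas w X)"
    "attains_magnitude X (rz X (scl (1 / smeas w X) (pc w)))"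
    "attains_magnitude X \<mu> \<longleftrightarrow> (fsm X \<mu> \<and> (\<forall>A\<in>sets RX. smeas \<mu> A = smeas w A / smeas w X))"
proof -
  define wc where "wc = pc w"
  define W where "W = smeas w X"
  have fw: "fsm X w" using w by (simp add: is_weight_def)
  have vw: "validc X wc" using fw by (simp add: wc_def)
  have Zw: "Zc wc x = 1" if "x \<in> X" for x using w that by (simp add: wc_def Zc_pc is_weight_def)
  have Bw: "Bc wc d = cset d X" if d: "validc X d" for d
  proof -
    have "Bc wc d = cfun d (\<lambda>_. 1)" unfolding Bc_def by (rule cfun_cong[OF d]) (simp add: Zw)
    then show ?thesis using cfun_one[OF d] by simp
  qed
  have BwW: "Bc wc wc = W" using Bw[OF vw] by (simp add: W_def wc_def)
  obtain x0 where x0: "x0 \<in> X" using ne by blast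
  have "(Bc wc (dl x0))\<^sup>2 \<le> Bc wc wc * Bc (dl x0) (dl x0)" by (rule Bc_cs[OF vw dl_valid[OF x0]])
  then have W1: "1 \<le> W" using Bc_dl[OF vw x0] Zw[OF x0] Bc_dldl[OF x0] BwW by simp
  then show Wpos: "smeas w X > 0" by (simp add: W_def)
  have Wp: "W > 0" using W1 by simp
  have upper: "1 / winner \<mu> \<mu> \<le> W" if m: "fsm X \<mu>" "smeas \<mu> X = 1" for \<mu>
  proof -
    have vm: "validc X (pc \<mu>)" using m by simp
    have "(Bc wc (pc \<mu>))\<^sup>2 \<le> Bc wc wc * Bc (pc \<mu>) (pc \<mu>)" by (rule Bc_cs[OF vw vm])
    then have "1 \<le> W * winner \<mu> \<mu>" using Bw[OF vm] m BwW by (simp add: winner_eq)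
    then have h1: "1 \<le> W * winner \<mu> \<mu>" .
    then have "W * winner \<mu> \<mu> > 0" by linarith
    then have wp: "winner \<mu> \<mu> > 0" using Wp by (simp add: zero_less_mult_iff)
    show ?thesis using h1 by (subst pos_divide_le_eq[OF wp]) (simp add: mult.commute)
  qed
  define \<mu>0 where "\<mu>0 = rz X (scl (1 / W) wc)"
  have v0: "validc X (scl (1 / W) wc)" using vw by simp
  have f0: "fsm X \<mu>0" unfolding \<mu>0_def by (rule rz_fsm[OF v0])
  have s0: "smeas \<mu>0 X = 1" unfolding \<mu>0_def using rz_smeas[OF v0 X_sets] Wp
    by (simp add: W_def wc_def)
  have w0: "winner \<mu>0 \<mu>0 = 1 / W" unfolding \<mu>0_def using winner_rz[OF v0 v0] BwW Wp
    by (simp add: power2_eq_square field_simps)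
  have magW: "magnitude X = ereal W"
  proof (rule antisym)
    show "magnitude X \<le> ereal W" by (rule mag_least) (use upper in auto)
    show "ereal W \<le> magnitude X" using mag_upper[OF f0 s0] w0 Wp by simp
  qed
  then show "magnitude X = ereal (smeas w X)" by (simp add: W_def)
  show "attains_magnitude X (rz X (scl (1 / smeas w X) (pc w)))"
    using f0 s0 w0 magW Wp unfolding attains_magnitude_def \<mu>0_def W_def wc_def by simp
  show "attains_magnitude X \<mu> \<longleftrightarrow> (fsm X \<mu> \<and> (\<forall>A\<in>sets RX. smeas \<mu> A = smeas w A / smeas w X))"
  proof
    assume a: "attains_magnitude X \<mu>"
    then have fm: "fsm X \<mu>" and sm: "smeas \<mu> X = 1" and mg: "magnitude X = ereal (1 / winner \<mu> \<mu>)"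
      by (auto simp: attains_magnitude_def)
    have "1 / winner \<mu> \<mu> = W" using mg magW by simp
    then have wm: "winner \<mu> \<mu> = 1 / W" using Wp by (cases "winner \<mu> \<mu> = 0") (auto simp: field_simps)
    define cm where "cm = pc \<mu>"
    have vm: "validc X cm" using fm by (simp add: cm_def)
    have c1: "Bc cm wc = 1" using Bc_sym[OF vm vw] Bw[OF vm] sm by (simp add: cm_def)
    have h0: "Bc (cm @ scl (- 1 / W) wc) (cm @ scl (- 1 / W) wc) = 0"
      using Bc_expand[OF vm vw, of "- 1 / W"] c1 BwW wm Wp
      by (simp add: cm_def winner_eq power2_eq_square field_simps)
    have vr: "validc X (cm @ scl (- 1 / W) wc)" using vm vw by simp
    have z: "cset (cm @ scl (- 1 / W) wc) A = 0" if "A \<in> sets RX" for A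
      by (rule null_sets[OF vr h0 that])
    show "fsm X \<mu> \<and> (\<forall>A\<in>sets RX. smeas \<mu> A = smeas w A / smeas w X)"
      using fm z Wp by (auto simp: cm_def wc_def W_def field_simps)
  next
    assume a: "fsm X \<mu> \<and> (\<forall>A\<in>sets RX. smeas \<mu> A = smeas w A / smeas w X)"
    then have fm: "fsm X \<mu>" and sa: "\<And>A. A \<in> sets RX \<Longrightarrow> smeas \<mu> A = smeas w A / W"
      by (auto simp: W_def)
    have sm: "smeas \<mu> X = 1" using sa[OF X_sets] Wp by (simp add: W_def)
    define cm where "cm = pc \<mu>"
    have vm: "validc X cm" using fm by (simp add: cm_def)
    have vr: "validc X (cm @ scl (- 1 / W) wc)" using vm vw by simp
    have "Bc (cm @ scl (- 1 / W) wc) cm = 0"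
    proof (rule Bc_null[OF vr vm])
      fix B assume "B \<in> sets RX"
      then show "cset (cm @ scl (- 1 / W) wc) B = 0" using sa Wp by (simp add: cm_def wc_def field_simps)
    qed
    moreover have "Bc (cm @ scl (- 1 / W) wc) cm = Bc cm cm + (- 1 / W) * Bc wc cm"
      using Zc_left_add[OF vm _ vm, of "scl (- 1 / W) wc"] vw by simp
    ultimately have "winner \<mu> \<mu> = 1 / W" using Bw[OF vm] sm by (simp add: cm_def winner_eq)
    then show "attains_magnitude X \<mu>" using fm sm magW Wp by (simp add: attains_magnitude_def)
  qed
qed

lemma weighted_imp:
  assumes a: "attains_magnitude X \<mu>" and ne: "X \<noteq> {}"
  shows "\<exists>w. is_weight X w"
proof -
  have fm: "fsm X \<mu>" and sm: "smeas \<mu> X = 1" and mg: "magnitude X = ereal (1 / winner \<mu> \<mu>)"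
    using a by (auto simp: attains_magnitude_def)
  define cm where "cm = pc \<mu>"
  have vm: "validc X cm" using fm by (simp add: cm_def)
  define b where "b = winner \<mu> \<mu>"
  have bB: "Bc cm cm = b" by (simp add: b_def cm_def winner_eq)
  have ub: "1 / winner (rz X c) (rz X c) \<le> 1 / b" if c: "validc X c" "cset c X = 1" for c
  proof -
    have "ereal (1 / winner (rz X c) (rz X c)) \<le> magnitude X"
      by (rule mag_upper[OF rz_fsm[OF c(1)]]) (simp add: rz_smeas[OF c(1) X_sets] c(2))
    then show ?thesis using mg by (simp add: b_def)
  qed
  obtain x0 where x0: "x0 \<in> X" using ne by blast
  have "1 / winner (rz X (dl x0)) (rz X (dl x0)) \<le> 1 / b" by (rule ub) (auto simp: dl_valid x0 dl_cset)
  then have "1 \<le> 1 / b" using winner_rz[OF dl_valid[OF x0] dl_valid[OF x0]] Bc_dldl[OF x0] by simp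
  then have bp: "b > 0"
  proof (cases "b > 0")
    case False
    then have "1 / b \<le> 0" by (intro divide_nonneg_nonpos) auto
    then show ?thesis using \<open>1 \<le> 1 / b\<close> by linarith
  qed
  have zb: "Zc cm x = b" if x: "x \<in> X" for x
  proof -
    define z where "z = Zc cm x"
    have vd: "validc X (dl x)" by (rule dl_valid[OF x])
    have "2 * (z - b) = 0"
    proof (rule pert[OF bp])
      fix t :: real
      define ct where "ct = scl (1 - t) cm @ scl t (dl x)"
      have vc: "validc X ct" using vm vd by (simp add: ct_def)
      have sc: "cset ct X = 1" using sm dl_cset[OF x] by (simp add: ct_def cm_def algebra_simps)
      have "Bc ct ct = Bc (scl (1 - t) cm) (scl (1 - t) cm) + 2 * t * Bc (scl (1 - t) cm) (dl x) + t\<^sup>2 * Bc (dl x) (dl x)"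
        unfolding ct_def by (rule Bc_expand) (use vm vd in auto)
      also have "\<dots> = b + 2 * (z - b) * t + (b - 2 * z + 1) * t\<^sup>2"
        using bB Bc_dl[OF vm x] Bc_dldl[OF x] by (simp add: z_def power2_eq_square algebra_simps)
      finally have q: "winner (rz X ct) (rz X ct) = b + 2 * (z - b) * t + (b - 2 * z + 1) * t\<^sup>2"
        using winner_rz[OF vc vc] by simp
      assume pos: "0 < b + 2 * (z - b) * t + (b - 2 * z + 1) * t\<^sup>2"
      have "1 / (b + 2 * (z - b) * t + (b - 2 * z + 1) * t\<^sup>2) \<le> 1 / b" using ub[OF vc sc] q by simp
      then show "b \<le> b + 2 * (z - b) * t + (b - 2 * z + 1) * t\<^sup>2" using pos bp by (simp add: field_simps)
    qed
    then show ?thesis by (simp add: z_def)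
  qed
  define w where "w = rz X (scl (1 / b) cm)"
  have vw: "validc X (scl (1 / b) cm)" using vm by simp
  have "is_weight X w"
    unfolding is_weight_def
  proof
    show "fsm X w" unfolding w_def by (rule rz_fsm[OF vw])
    show "\<forall>x\<in>X. Zop w x = 1" using Zop_rz[OF vw] zb bp by (simp add: w_def)
  qed
  then show ?thesis by blast
qed

end

theorem proposition2p3:
  fixes X :: "'a::metric_space set"
    and \<phi> :: "'a \<Rightarrow> 'h::{real_inner, complete_space}"
  assumes "compact X" and "X \<noteq> {}"
    and negtype: "\<forall>x\<in>X. \<forall>y\<in>X. dist (\<phi> x) (\<phi> y) = sqrt (dist x y)"
  shows "(weighted X \<longleftrightarrow> (\<exists>w. is_weight X w)) \<and>
         (\<forall>w. is_weight X w \<longrightarrow>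
              smeas w X \<noteq> 0 \<and> magnitude X = ereal (smeas w X) \<and>
              (\<forall>\<mu>. attains_magnitude X \<mu> \<longleftrightarrow>
                   (fsm X \<mu> \<and> (\<forall>A\<in>sets (restrict_space borel X).
                                  smeas \<mu> A = smeas w A / smeas w X))))"
proof -
  interpret nt X \<phi>
    by unfold_locales (use assms in auto)
  show ?thesis
  proof (intro conjI allI impI)
    show "weighted X \<longleftrightarrow> (\<exists>w. is_weight X w)"
      using weighted_imp weight_props(3) assms(2) unfolding weighted_def by blast
  next
    fix w assume w: "is_weight X w"
    show "smeas w X \<noteq> 0" using weight_props(1)[OF w assms(2)] by simp
    show "magnitude X = ereal (smeas w X)" using weight_props(2)[OF w assms(2)] .
    fix \<mu>
    show "attains_magnitude X \<mu> \<longleftrightarrow> (fsm X \<mu> \<and> (\<forall>A\<in>sets (restrict_space borel X). smeas \<mu> A = smeas w A / smeas w X))"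
      using weight_props(4)[OF w assms(2)] .
  qed
qed


end
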